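(* The category $\mathbb S^{\mathbb P}_r$, with sum $\oplus$, unit $0$, symmetries $\sigma$ and trace operator $\mathrm{tr}$, is a traced symmetric monoidal category.
   Context: Notation: $[k]=\{1,\dots,k\}$ ($[0]=\emptyset$); $T(X)=X+\mathbb R\times X+\{\exists^*,\forall^*\}$ (disjoint union); composition in diagrammatic order. $\mathbb S^{\mathbb P}_r$ has natural numbers as objects; an arrow $f:m\to n$ is a function $f:[m]\to T([n])$ satisfying realizability: if $f(i)=k\in[n]$ then for every $j\in[m]\setminus\{i\}$, $f(j)\ne k$ and $f(j)\ne(r,k)$ for all $r\in\mathbb R$. Composition of $f:m\to l$ and $g:l\to n$: $(f;g)(i)=f(i)$ if $f(i)\in\{\exists^*,\forall^*\}$; $=g(j)$ if $f(i)=j\in[l]$; $=g(j)$ if $f(i)=(r,j)$ and $g(j)\in\{\exists^*,\forall^*\}$; $=(r,k)$ if $f(i)=(r,j)$ and $g(j)=k\in[n]$; $=(r+r',k)$ if $f(i)=(r,j)$ and $g(j)=(r',k)$. Identity $\mathrm{id}_m(i)=i$. Symmetry $\sigma_{m,n}:m+n\to n+m$, $\sigma_{m,n}(i)=n+i$ for $i\le m$, $\sigma_{m,n}(m+j)=j$. Sum of $f:m\to n$ and $g:k\to l$: $(f\oplus g)(i)=f(i)$ for $i\in[m]$, and $(f\oplus g)(m+i)$ is $g(i)$ with its element $j\in[l]$ (if any) replaced by $n+j$. Trace of $f:l+m\to l+n$: for $i\in[m]$ define a sequence $v$ by $v_0=l+i$ and: if $j=0$ or $v_j\in[l]$ then $v_{j+1}=f(v_j)$;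 if $v_j=(r,k)$ with $k\in[l]$ then $v_{j+1}=f(k)$; otherwise ($j\ge1$ and $v_j\in\{l+1,..,l+n\}\cup\mathbb R\times\{l+1,..,l+n\}\cup\{\exists^*,\forall^*\}$) the sequence stops. If $v=(v_0,\dots,v_K)$ is finite, let $S$ be the sum of the first components of all $v_j\in\mathbb R\times[l+n]$, $1\le j\le K$; then $\mathrm{tr}^l_{m,n}(f)(i)=v_K$ if $v_K\in\{\exists^*,\forall^*\}$; $=k$ if $v_K=l+k$ and $v_j\in[l]$ for all $1\le j<K$; $=(S,k)$ if $v_K=l+k$ and some $v_j$, $1\le j<K$, lies in $\mathbb R\times[l]$; $=(S,k)$ if $v_K=(r,l+k)$. If $v$ is infinite, let $w'_1,w'_2,\dots$ be the first components, in order, of the (infinitely many) entries of $v$ lying in $\mathbb R\times[l]$; then $\mathrm{tr}^l_{m,n}(f)(i)=\exists^*$ if $\liminf_{N\to\infty}\frac1N\sum_{t=1}^Nw'_t\ge0$, and $\forall^*$ otherwise. *)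

theory Defs
  imports Complex_Main "HOL-Library.Extended_Real" "HOL-Library.Infinite_Set"
begin

text \<open>T(X) = X + R x X + {exists*, forall*}, instantiated at X = nat.
  An arrow f : m -> n is a function nat => tval whose values on [m] = {1..m} matter.\<close>

datatype tval = Nd nat | Wt real nat | EStar | AStar

definition in_T :: "nat \<Rightarrow> tval \<Rightarrow> bool" where
  "in_T n x = (case x of Nd k \<Rightarrow> 1 \<le> k \<and> k \<le> n | Wt r k \<Rightarrow> 1 \<le> k \<and> k \<le> n | _ \<Rightarrow> True)"

definition arr :: "nat \<Rightarrow> nat \<Rightarrow> (nat \<Rightarrow> tval) \<Rightarrow> bool" where
  "arr m n f \<longleftrightarrow>
     (\<forall>i\<in>{1..m}. in_T n (f i)) \<and>
     (\<forall>i\<in>{1..m}. \<forall>k. f i = Nd k \<longrightarrow>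
        (\<forall>j\<in>{1..m} - {i}. f j \<noteq> Nd k \<and> (\<forall>r. f j \<noteq> Wt r k)))"

definition arr_eq :: "nat \<Rightarrow> (nat \<Rightarrow> tval) \<Rightarrow> (nat \<Rightarrow> tval) \<Rightarrow> bool" where
  "arr_eq m f g \<longleftrightarrow> (\<forall>i\<in>{1..m}. f i = g i)"

text \<open>Composition in diagrammatic order: f ; g.\<close>
definition comp :: "(nat \<Rightarrow> tval) \<Rightarrow> (nat \<Rightarrow> tval) \<Rightarrow> (nat \<Rightarrow> tval)" where
  "comp f g = (\<lambda>i. case f i of
       Nd j \<Rightarrow> g j
     | Wt r j \<Rightarrow> (case g j of Nd k \<Rightarrow> Wt r k | Wt r' k \<Rightarrow> Wt (r + r') k | e \<Rightarrow> e)
     | e \<Rightarrow> e)"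

definition idA :: "nat \<Rightarrow> tval" where
  "idA = (\<lambda>i. Nd i)"

definition sym :: "nat \<Rightarrow> nat \<Rightarrow> (nat \<Rightarrow> tval)" where
  "sym m n = (\<lambda>i. if i \<le> m then Nd (n + i) else Nd (i - m))"

definition shiftT :: "nat \<Rightarrow> tval \<Rightarrow> tval" where
  "shiftT n x = (case x of Nd j \<Rightarrow> Nd (n + j) | Wt r j \<Rightarrow> Wt r (n + j) | e \<Rightarrow> e)"

definition osum :: "nat \<Rightarrow> nat \<Rightarrow> (nat \<Rightarrow> tval) \<Rightarrow> (nat \<Rightarrow> tval) \<Rightarrow> (nat \<Rightarrow> tval)" where
  "osum m n f g = (\<lambda>i. if i \<le> m then f i else shiftT n (g (i - m)))"

definition tcont :: "nat \<Rightarrow> tval \<Rightarrow> bool" where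
  "tcont l x = (case x of Nd k \<Rightarrow> 1 \<le> k \<and> k \<le> l | Wt r k \<Rightarrow> 1 \<le> k \<and> k \<le> l | _ \<Rightarrow> False)"

definition tnext :: "(nat \<Rightarrow> tval) \<Rightarrow> tval \<Rightarrow> tval" where
  "tnext f x = (case x of Nd k \<Rightarrow> f k | Wt r k \<Rightarrow> f k | e \<Rightarrow> e)"

text \<open>tseq f l i j = v_j (after stopping, the sequence is frozen at its last entry).\<close>
primrec tseq :: "(nat \<Rightarrow> tval) \<Rightarrow> nat \<Rightarrow> nat \<Rightarrow> nat \<Rightarrow> tval" where
  "tseq f l i 0 = Nd (l + i)"
| "tseq f l i (Suc j) = (if j = 0 \<or> tcont l (tseq f l i j) then tnext f (tseq f l i j) else tseq f l i j)"

definition wt_in :: "nat \<Rightarrow> tval \<Rightarrow> real" where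
  "wt_in N x = (case x of Wt r k \<Rightarrow> (if 1 \<le> k \<and> k \<le> N then r else 0) | _ \<Rightarrow> 0)"

definition trace :: "nat \<Rightarrow> nat \<Rightarrow> (nat \<Rightarrow> tval) \<Rightarrow> (nat \<Rightarrow> tval)" where
  "trace l n f = (\<lambda>i. let v = tseq f l i in
     if (\<exists>K\<ge>1. \<not> tcont l (v K)) then
       (let K = (LEAST K. K \<ge> 1 \<and> \<not> tcont l (v K));
            S = (\<Sum>j\<in>{1..K}. wt_in (l + n) (v j)) in
        case v K of
          EStar \<Rightarrow> EStar
        | AStar \<Rightarrow> AStar
        | Nd p \<Rightarrow> (if (\<exists>j\<in>{1..<K}. \<exists>r k. v j = Wt r k \<and> 1 \<le> k \<and> k \<le> l)
                   then Wt S (p - l) else Nd (p - l))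
        | Wt r p \<Rightarrow> Wt S (p - l))
     else
       (let J = {j. \<exists>r k. v j = Wt r k \<and> 1 \<le> k \<and> k \<le> l};
            w = (\<lambda>t. wt_in l (v (enumerate J t))) in
        if liminf (\<lambda>N. ereal ((\<Sum>t<Suc N. w t) / real (Suc N))) \<ge> 0 then EStar else AStar))"

text \<open>Axioms of a (strict) traced symmetric monoidal category on objects nat,
  with tensor m + n on objects, unit 0. Traces are taken on the left (first l wires).\<close>
definition traced_smc :: bool where
  "traced_smc \<longleftrightarrow>
   \<comment> \<open>category\<close>
   (\<forall>m. arr m m idA) \<and>
   (\<forall>m l n f g. arr m l f \<longrightarrow> arr l n g \<longrightarrow> arr m n (comp f g)) \<and>
   (\<forall>m n f. arr m n f \<longrightarrow> arr_eq m (comp idA f) f \<and> arr_eq m (comp f idA) f) \<and>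
   (\<forall>m l k n f g h. arr m l f \<longrightarrow> arr l k g \<longrightarrow> arr k n h \<longrightarrow>
        arr_eq m (comp (comp f g) h) (comp f (comp g h))) \<and>
   \<comment> \<open>monoidal structure (strict)\<close>
   (\<forall>m n k l f g. arr m n f \<longrightarrow> arr k l g \<longrightarrow> arr (m + k) (n + l) (osum m n f g)) \<and>
   (\<forall>m n. arr_eq (m + n) (osum m m idA idA) idA) \<and>
   (\<forall>m1 m2 m3 k1 k2 k3 f g f' g'. arr m1 m2 f \<longrightarrow> arr m2 m3 g \<longrightarrow> arr k1 k2 f' \<longrightarrow> arr k2 k3 g' \<longrightarrow>
        arr_eq (m1 + k1) (osum m1 m3 (comp f g) (comp f' g')) (comp (osum m1 m2 f f') (osum m2 m3 g g'))) \<and>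
   (\<forall>m n k l p q f g h. arr m n f \<longrightarrow> arr k l g \<longrightarrow> arr p q h \<longrightarrow>
        arr_eq (m + k + p) (osum (m + k) (n + l) (osum m n f g) h) (osum m n f (osum k l g h))) \<and>
   (\<forall>m n f. arr m n f \<longrightarrow> arr_eq m (osum m n f idA) f \<and> arr_eq m (osum 0 0 idA f) f) \<and>
   \<comment> \<open>symmetry\<close>
   (\<forall>m n. arr (m + n) (n + m) (sym m n)) \<and>
   (\<forall>m n k l f g. arr m n f \<longrightarrow> arr k l g \<longrightarrow>
        arr_eq (m + k) (comp (osum m n f g) (sym n l)) (comp (sym m k) (osum k l g f))) \<and>
   (\<forall>m n. arr_eq (m + n) (comp (sym m n) (sym n m)) idA) \<and>
   (\<forall>m n k. arr_eq (m + n + k) (sym m (n + k)) (comp (osum (m + n) (n + m) (sym m n) idA) (osum n n idA (sym m k)))) \<and>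
   \<comment> \<open>trace\<close>
   (\<forall>l m n f. arr (l + m) (l + n) f \<longrightarrow> arr m n (trace l n f)) \<and>
   (\<forall>l m m' n' n f g h. arr m m' g \<longrightarrow> arr (l + m') (l + n') f \<longrightarrow> arr n' n h \<longrightarrow>
        arr_eq m (trace l n (comp (comp (osum l l idA g) f) (osum l l idA h)))
                 (comp (comp g (trace l n' f)) h)) \<and>
   (\<forall>l l' m n f g. arr (l + m) (l' + n) f \<longrightarrow> arr l' l g \<longrightarrow>
        arr_eq m (trace l n (comp f (osum l' l g idA))) (trace l' n (comp (osum l' l g idA) f))) \<and>
   (\<forall>m n f. arr m n f \<longrightarrow> arr_eq m (trace 0 n f) f) \<and>
   (\<forall>l l' m n f. arr (l + l' + m) (l + l' + n) f \<longrightarrow>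
        arr_eq m (trace (l + l') n f) (trace l' n (trace l (l' + n) f))) \<and>
   (\<forall>l m n k p f g. arr (l + m) (l + n) f \<longrightarrow> arr k p g \<longrightarrow>
        arr_eq (m + k) (trace l (n + p) (osum (l + m) (l + n) f g)) (osum m n (trace l n f) g)) \<and>
   (\<forall>l. arr_eq l (trace l l (sym l l)) idA)"

end

theory Submission
  imports Defs
begin


definition tcontS :: "nat set \<Rightarrow> tval \<Rightarrow> bool" where
  "tcontS C x = (case x of Nd k \<Rightarrow> k \<in> C | Wt r k \<Rightarrow> k \<in> C | _ \<Rightarrow> False)"

fun nodeOf :: "tval \<Rightarrow> nat" where
  "nodeOf (Nd k) = k" | "nodeOf (Wt r k) = k" | "nodeOf EStar = 0" | "nodeOf AStar = 0"

fun addW :: "real \<Rightarrow> tval \<Rightarrow> tval" where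
  "addW r (Nd k) = Wt r k" | "addW r (Wt s k) = Wt (r + s) k" | "addW r EStar = EStar" | "addW r AStar = AStar"

fun pre :: "tval \<Rightarrow> tval \<Rightarrow> tval" where
  "pre (Wt r k) e = addW r e" | "pre (Nd k) e = e" | "pre EStar e = e" | "pre AStar e = e"

definition isnd :: "tval \<Rightarrow> bool" where
  "isnd x = (x \<noteq> EStar \<and> x \<noteq> AStar)"

lemma tcontS_simps[simp]:
  "tcontS C (Nd k) = (k \<in> C)" "tcontS C (Wt r k) = (k \<in> C)"
  "tcontS C EStar = False" "tcontS C AStar = False"
  by (simp_all add: tcontS_def)

lemma isnd_simps[simp]: "isnd (Nd k)" "isnd (Wt r k)" "\<not> isnd EStar" "\<not> isnd AStar"
  by (simp_all add: isnd_def)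

lemma tcontS_isnd: "tcontS C x \<Longrightarrow> isnd x"
  by (cases x) auto

lemma tcontS_iff: "tcontS C x \<longleftrightarrow> isnd x \<and> nodeOf x \<in> C"
  by (cases x) auto

lemma tcont_eq: "tcont l x = tcontS {1..l} x"
  by (cases x) (auto simp: tcont_def)

lemma tnext_isnd: "isnd a \<Longrightarrow> tnext f a = f (nodeOf a)"
  by (cases a) (auto simp: tnext_def)

lemma tnext_star[simp]: "tnext f EStar = EStar" "tnext f AStar = AStar"
  by (simp_all add: tnext_def)

lemma pre_star[simp]: "pre a EStar = EStar" "pre a AStar = AStar"
  by (cases a; simp)+

lemma pre_isnd[simp]: "isnd (pre a e) = isnd e"
  by (cases a; cases e; simp)

lemma pre_node[simp]: "nodeOf (pre a e) = nodeOf e"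
  by (cases a; cases e; simp)

lemma tcontS_pre[simp]: "tcontS C (pre a e) = tcontS C e"
  by (simp add: tcontS_iff)

lemma pre_assoc: "isnd b \<Longrightarrow> pre a (pre b e) = pre (pre a b) e"
  by (cases a; cases b; cases e; simp add: add.assoc)

inductive fw :: "(nat \<Rightarrow> tval) \<Rightarrow> nat set \<Rightarrow> nat \<Rightarrow> tval \<Rightarrow> bool" for \<phi> C where
  fw_stop: "\<not> tcontS C (\<phi> x) \<Longrightarrow> fw \<phi> C x (\<phi> x)"
| fw_go: "tcontS C (\<phi> x) \<Longrightarrow> fw \<phi> C (nodeOf (\<phi> x)) e \<Longrightarrow> fw \<phi> C x (pre (\<phi> x) e)"

inductive rch :: "(nat \<Rightarrow> tval) \<Rightarrow> nat set \<Rightarrow> nat \<Rightarrow> nat \<Rightarrow> bool" for \<phi> C where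
  rch_base: "tcontS C (\<phi> x) \<Longrightarrow> rch \<phi> C x (nodeOf (\<phi> x))"
| rch_step: "rch \<phi> C x y \<Longrightarrow> tcontS C (\<phi> y) \<Longrightarrow> rch \<phi> C x (nodeOf (\<phi> y))"

definition cyc :: "(nat \<Rightarrow> tval) \<Rightarrow> nat set \<Rightarrow> nat \<Rightarrow> real \<Rightarrow> bool" where
  "cyc \<phi> C y w = (fw \<phi> (C - {y}) y (Wt w y) \<or> (w = 0 \<and> fw \<phi> (C - {y}) y (Nd y)))"

definition isgn :: "(nat \<Rightarrow> tval) \<Rightarrow> nat set \<Rightarrow> nat \<Rightarrow> tval" where
  "isgn \<phi> C s = (if \<exists>y w. rch \<phi> C s y \<and> cyc \<phi> C y w \<and> 0 \<le> w then EStar else AStar)"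

definition wres :: "(nat \<Rightarrow> tval) \<Rightarrow> nat set \<Rightarrow> nat \<Rightarrow> tval" where
  "wres \<phi> C s = (if \<exists>e. fw \<phi> C s e then (THE e. fw \<phi> C s e) else isgn \<phi> C s)"

lemma fw_det: "fw \<phi> C x e1 \<Longrightarrow> fw \<phi> C x e2 \<Longrightarrow> e1 = e2"
proof (induction arbitrary: e2 rule: fw.induct)
  case (fw_stop x)
  from fw_stop.prems show ?case
    by cases (use fw_stop.hyps in simp_all)
next
  case (fw_go x e)
  from fw_go.prems show ?case
  proof cases
    case fw_stop
    then show ?thesis using fw_go.hyps by simp
  next
    case (fw_go e')
    then show ?thesis using fw_go.IH by simp
  qed
qed

lemma fw_not_tcont: "fw \<phi> C x e \<Longrightarrow> \<not> tcontS C e"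
  by (induction rule: fw.induct) auto

lemma wres_fw: "fw \<phi> C x e \<Longrightarrow> wres \<phi> C x = e"
  unfolding wres_def using fw_det by (auto intro: the_equality)

lemma isgn_star: "isgn \<phi> C s = EStar \<or> isgn \<phi> C s = AStar"
  by (simp add: isgn_def)

lemma wres_isnd: "isnd (wres \<phi> C x) \<Longrightarrow> fw \<phi> C x (wres \<phi> C x)"
proof -
  assume a: "isnd (wres \<phi> C x)"
  show ?thesis
  proof (cases "\<exists>e. fw \<phi> C x e")
    case True
    then obtain e where "fw \<phi> C x e" by blast
    then show ?thesis using wres_fw by simp
  next
    case False
    then have "wres \<phi> C x = isgn \<phi> C x" by (simp add: wres_def)
    then show ?thesis using a isgn_star[of \<phi> C x] by auto
  qed
qed

lemma wres_div: "\<not> (\<exists>e. fw \<phi> C x e) \<Longrightarrow> wres \<phi> C x = isgn \<phi> C x"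
  by (simp add: wres_def)

lemma fw_mono: "fw \<phi> D x e \<Longrightarrow> D \<subseteq> D' \<Longrightarrow> \<not> tcontS D' e \<Longrightarrow> fw \<phi> D' x e"
proof (induction rule: fw.induct)
  case (fw_stop x)
  then show ?case by (simp add: fw.fw_stop)
next
  case (fw_go x e)
  have "tcontS D' (\<phi> x)" using fw_go.hyps(1) fw_go.prems(1) by (auto simp: tcontS_iff)
  then show ?case using fw_go by (auto intro: fw.fw_go)
qed

lemma rch_in: "rch \<phi> C x y \<Longrightarrow> y \<in> C"
  by (induction rule: rch.induct) (auto simp: tcontS_iff)

lemma rch_trans: "rch \<phi> C y z \<Longrightarrow> rch \<phi> C x y \<Longrightarrow> rch \<phi> C x z"
  by (induction rule: rch.induct) (auto intro: rch.intros)

lemma rch_mono: "rch \<phi> C x y \<Longrightarrow> C \<subseteq> C' \<Longrightarrow> rch \<phi> C' x y"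
proof (induction rule: rch.induct)
  case (rch_base x)
  then show ?case by (metis rch.rch_base subsetD tcontS_iff)
next
  case (rch_step x y)
  then show ?case by (metis rch.rch_step subsetD tcontS_iff)
qed

lemma fw_rch: "fw \<phi> D x e \<Longrightarrow> D \<subseteq> C \<Longrightarrow> tcontS C e \<Longrightarrow> rch \<phi> C x (nodeOf e)"
proof (induction rule: fw.induct)
  case (fw_stop x)
  then show ?case by (simp add: rch_base)
next
  case (fw_go x e)
  have "tcontS C (\<phi> x)" using fw_go by (auto simp: tcontS_iff)
  then have "rch \<phi> C x (nodeOf (\<phi> x))" by (rule rch_base)
  moreover have "rch \<phi> C (nodeOf (\<phi> x)) (nodeOf e)" using fw_go by simp
  ultimately show ?case using rch_trans by simp
qed

lemma fw_sub: "fw \<phi> C s e \<Longrightarrow> C0 \<subseteq> C \<Longrightarrow> \<exists>e'. fw \<phi> C0 s e'"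
proof (induction rule: fw.induct)
  case (fw_stop x)
  then have "\<not> tcontS C0 (\<phi> x)" by (auto simp: tcontS_iff)
  then show ?case by (blast intro: fw.fw_stop)
next
  case (fw_go x e)
  then show ?case by (cases "tcontS C0 (\<phi> x)") (auto intro: fw.intros)
qed

lemma cyc_fw: "cyc \<phi> C y w \<Longrightarrow> \<exists>e. fw \<phi> (C - {y}) y e \<and> isnd e \<and> nodeOf e = y"
  unfolding cyc_def by (elim disjE conjE) force+

lemma cyc_rch: "cyc \<phi> C y w \<Longrightarrow> y \<in> C \<Longrightarrow> rch \<phi> C y y"
proof -
  assume a: "cyc \<phi> C y w" "y \<in> C"
  obtain e where e: "fw \<phi> (C - {y}) y e" "isnd e" "nodeOf e = y" using cyc_fw[OF a(1)] by blast
  have "tcontS C e" using e a(2) by (simp add: tcontS_iff)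
  from fw_rch[OF e(1) _ this] e(3) show ?thesis by auto
qed

lemma cyc_mono: "cyc \<phi> C y w \<Longrightarrow> C \<subseteq> C' \<Longrightarrow> cyc \<phi> C' y w"
proof -
  assume a: "cyc \<phi> C y w" "C \<subseteq> C'"
  have s: "C - {y} \<subseteq> C' - {y}" using a(2) by blast
  show ?thesis using a(1) fw_mono[OF _ s, where x=y and e="Wt w y"] fw_mono[OF _ s, where x=y and e="Nd y"]
    unfolding cyc_def by auto
qed

lemma D1: "finite C \<Longrightarrow> (\<exists>e. fw \<phi> C x e) \<or> (\<exists>y w. rch \<phi> C x y \<and> cyc \<phi> C y w)"
proof (induction "card C" arbitrary: C x rule: less_induct)
  case less
  show ?case
  proof (cases "tcontS C (\<phi> x)")
    case False
    then show ?thesis using fw_stop[of C \<phi> x] by blast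
  next
    case True
    define k where "k = nodeOf (\<phi> x)"
    have kC: "k \<in> C" using True by (simp add: tcontS_iff k_def)
    have rk: "rch \<phi> C x k" using True by (simp add: k_def rch_base)
    have "card (C - {k}) < card C" by (rule card_Diff1_less[OF less.prems kC])
    moreover have "finite (C - {k})" using less.prems by simp
    ultimately have IH: "(\<exists>e. fw \<phi> (C - {k}) k e) \<or> (\<exists>y w. rch \<phi> (C - {k}) k y \<and> cyc \<phi> (C - {k}) y w)"
      by (rule less.hyps)
    then show ?thesis
    proof
      assume "\<exists>e. fw \<phi> (C - {k}) k e"
      then obtain e where e: "fw \<phi> (C - {k}) k e" by blast
      show ?thesis
      proof (cases "tcontS C e")
        case True
        then have nk: "nodeOf e = k" using fw_not_tcont[OF e] by (auto simp: tcontS_iff)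
        have "\<exists>w. cyc \<phi> C k w"
        proof (cases e)
          case (Nd p)
          then show ?thesis using e nk unfolding cyc_def by auto
        next
          case (Wt r p)
          then show ?thesis using e nk unfolding cyc_def by auto
        qed (use True in auto)
        then show ?thesis using rk by blast
      next
        case False
        then have "fw \<phi> C k e" using fw_mono[OF e] by auto
        then have "fw \<phi> C x (pre (\<phi> x) e)" using fw_go[of C \<phi> x, OF True] by (simp add: k_def)
        then show ?thesis by blast
      qed
    next
      assume "\<exists>y w. rch \<phi> (C - {k}) k y \<and> cyc \<phi> (C - {k}) y w"
      then obtain y w where "rch \<phi> (C - {k}) k y" "cyc \<phi> (C - {k}) y w" by blast
      moreover have "C - {k} \<subseteq> C" by blast
      ultimately have a: "rch \<phi> C k y" "cyc \<phi> C y w" by (simp_all add: rch_mono cyc_mono)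
      have "rch \<phi> C x y" using rch_trans[OF a(1) rk] .
      then show ?thesis using a(2) by blast
    qed
  qed
qed

lemma fw_inv_go: "fw \<phi> C x e \<Longrightarrow> tcontS C (\<phi> x) \<Longrightarrow> \<exists>e'. fw \<phi> C (nodeOf (\<phi> x)) e' \<and> e = pre (\<phi> x) e'"
  by (erule fw.cases) auto

lemma rch_first: "rch \<phi> C x y \<Longrightarrow> tcontS C (\<phi> x) \<Longrightarrow> y = nodeOf (\<phi> x) \<or> rch \<phi> C (nodeOf (\<phi> x)) y"
proof (induction rule: rch.induct)
  case (rch_base x)
  then show ?case by simp
next
  case (rch_step x y)
  then show ?case by (auto intro: rch.intros)
qed

lemma isgn_step: "tcontS C (\<phi> x) \<Longrightarrow> isgn \<phi> C x = isgn \<phi> C (nodeOf (\<phi> x))"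
proof -
  assume t: "tcontS C (\<phi> x)"
  let ?k = "nodeOf (\<phi> x)"
  have kC: "?k \<in> C" using t by (simp add: tcontS_iff)
  have "(rch \<phi> C x y \<and> cyc \<phi> C y w) = (rch \<phi> C ?k y \<and> cyc \<phi> C y w)" for y w
  proof
    assume a: "rch \<phi> C x y \<and> cyc \<phi> C y w"
    then have "y = ?k \<or> rch \<phi> C ?k y" using rch_first t by blast
    then show "rch \<phi> C ?k y \<and> cyc \<phi> C y w" using a cyc_rch kC by blast
  next
    assume "rch \<phi> C ?k y \<and> cyc \<phi> C y w"
    then show "rch \<phi> C x y \<and> cyc \<phi> C y w" using rch_trans rch_base[of C \<phi> x, OF t] by blast
  qed
  then have "(\<exists>y w. rch \<phi> C x y \<and> cyc \<phi> C y w \<and> 0 \<le> w) = (\<exists>y w. rch \<phi> C ?k y \<and> cyc \<phi> C y w \<and> 0 \<le> w)"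
    by blast
  then show ?thesis unfolding isgn_def by simp
qed

lemma wres_step: "wres \<phi> C x = (if tcontS C (\<phi> x) then pre (\<phi> x) (wres \<phi> C (nodeOf (\<phi> x))) else \<phi> x)"
proof (cases "tcontS C (\<phi> x)")
  case False
  then show ?thesis using wres_fw[OF fw_stop[of C \<phi> x, OF False]] by simp
next
  case True
  show ?thesis
  proof (cases "\<exists>e. fw \<phi> C (nodeOf (\<phi> x)) e")
    case True2: True
    then obtain e where e: "fw \<phi> C (nodeOf (\<phi> x)) e" by blast
    then show ?thesis using wres_fw[OF e] wres_fw[OF fw_go[of C \<phi> x, OF True e]] True by simp
  next
    case False
    then have "\<not> (\<exists>e. fw \<phi> C x e)" using fw_inv_go True by blast
    then have "wres \<phi> C x = isgn \<phi> C (nodeOf (\<phi> x))" using wres_div isgn_step True by metis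
    moreover have "wres \<phi> C (nodeOf (\<phi> x)) = isgn \<phi> C (nodeOf (\<phi> x))" using wres_div False by metis
    ultimately show ?thesis using True isgn_star[of \<phi> C "nodeOf (\<phi> x)"] by auto
  qed
qed


primrec it :: "(nat \<Rightarrow> tval) \<Rightarrow> nat \<Rightarrow> nat \<Rightarrow> tval" where
  "it \<phi> x 0 = Nd x" | "it \<phi> x (Suc j) = tnext \<phi> (it \<phi> x j)"

declare it.simps(2)[simp del]

lemma it_Suc: "it \<phi> x (Suc j) = tnext \<phi> (it \<phi> x j)"
  by (rule it.simps(2))

definition isWt :: "tval \<Rightarrow> bool" where "isWt x = (\<exists>r k. x = Wt r k)"

fun wgt :: "tval \<Rightarrow> real" where
  "wgt (Wt r k) = r" | "wgt (Nd k) = 0" | "wgt EStar = 0" | "wgt AStar = 0"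

fun mk :: "bool \<Rightarrow> real \<Rightarrow> tval \<Rightarrow> tval" where
  "mk b S (Nd p) = (if b then Wt S p else Nd p)" | "mk b S (Wt r p) = Wt S p"
| "mk b S EStar = EStar" | "mk b S AStar = AStar"

definition agg :: "(nat \<Rightarrow> tval) \<Rightarrow> nat \<Rightarrow> tval" where
  "agg v K = mk (\<exists>j\<in>{1..K}. isWt (v j)) (\<Sum>j=1..K. wgt (v j)) (v K)"

lemma isWt_simps[simp]: "isWt (Wt r k)" "\<not> isWt (Nd k)" "\<not> isWt EStar" "\<not> isWt AStar"
  by (auto simp: isWt_def)

lemma wgt_notWt: "\<not> isWt x \<Longrightarrow> wgt x = 0"
  by (cases x) auto

lemma mk_isnd[simp]: "isnd (mk b S x) = isnd x"
  by (cases x) auto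

lemma mk_node[simp]: "nodeOf (mk b S x) = nodeOf x"
  by (cases x) auto

lemma it_1[simp]: "it \<phi> x (Suc 0) = \<phi> x"
  by (simp add: it_Suc tnext_def)

lemma it_shift: "isnd (it \<phi> x j) \<Longrightarrow> 0 < t \<Longrightarrow> it \<phi> x (j + t) = it \<phi> (nodeOf (it \<phi> x j)) t"
proof (induction t)
  case 0
  then show ?case by simp
next
  case (Suc t)
  show ?case
  proof (cases "t = 0")
    case True
    then show ?thesis using Suc.prems by (simp add: tnext_isnd it_Suc)
  next
    case False
    then show ?thesis using Suc by (simp add: it_Suc)
  qed
qed

lemma it_shift1: "isnd (\<phi> x) \<Longrightarrow> 0 < t \<Longrightarrow> it \<phi> x (Suc t) = it \<phi> (nodeOf (\<phi> x)) t"
  using it_shift[of \<phi> x "Suc 0" t] by simp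

lemma agg_1: "agg v (Suc 0) = v (Suc 0)"
  unfolding agg_def by (cases "v (Suc 0)") auto

lemma sum_noWt: "\<forall>j\<in>A. \<not> isWt (v j) \<Longrightarrow> (\<Sum>j\<in>A. wgt (v j)) = 0"
  by (simp add: wgt_notWt)

lemma agg_step:
  assumes a: "isnd (\<phi> x)" and K: "0 < K"
  shows "agg (it \<phi> x) (Suc K) = pre (\<phi> x) (agg (it \<phi> (nodeOf (\<phi> x))) K)"
proof -
  let ?a = "\<phi> x" and ?k = "nodeOf (\<phi> x)"
  let ?v = "it \<phi> x" and ?w = "it \<phi> ?k"
  have sh: "\<And>t. 0 < t \<Longrightarrow> ?v (Suc t) = ?w t" using it_shift1[of \<phi> x, OF a] by blast
  have "(\<Sum>j=1..Suc K. wgt (?v j)) = wgt (?v 1) + (\<Sum>j=Suc 1..Suc K. wgt (?v j))"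
    by (rule sum.atLeast_Suc_atMost) simp
  also have "(\<Sum>j=Suc 1..Suc K. wgt (?v j)) = (\<Sum>j=1..K. wgt (?v (Suc j)))"
    by (rule sum.shift_bounds_cl_Suc_ivl)
  also have "\<dots> = (\<Sum>j=1..K. wgt (?w j))"
    by (rule sum.cong) (auto simp: sh)
  finally have S: "(\<Sum>j=1..Suc K. wgt (?v j)) = wgt ?a + (\<Sum>j=1..K. wgt (?w j))" by simp
  have B: "(\<exists>j\<in>{1..Suc K}. isWt (?v j)) = (isWt ?a \<or> (\<exists>j\<in>{1..K}. isWt (?w j)))"
  proof
    assume "\<exists>j\<in>{1..Suc K}. isWt (?v j)"
    then obtain j where j: "j \<in> {1..Suc K}" "isWt (?v j)" by blast
    show "isWt ?a \<or> (\<exists>j\<in>{1..K}. isWt (?w j))"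
    proof (cases "j = 1")
      case True
      then show ?thesis using j by simp
    next
      case False
      then obtain j' where "j = Suc j'" "j' \<in> {1..K}" using j(1) by (cases j) auto
      then show ?thesis using j(2) sh[of j'] by auto
    qed
  next
    assume "isWt ?a \<or> (\<exists>j\<in>{1..K}. isWt (?w j))"
    then show "\<exists>j\<in>{1..Suc K}. isWt (?v j)"
    proof
      assume "isWt ?a"
      then show ?thesis using K by (intro bexI[of _ 1]) auto
    next
      assume "\<exists>j\<in>{1..K}. isWt (?w j)"
      then obtain j where "j \<in> {1..K}" "isWt (?w j)" by blast
      then show ?thesis using sh[of j] by (intro bexI[of _ "Suc j"]) auto
    qed
  qed
  have L: "?v (Suc K) = ?w K" using sh K by simp
  have Z: "\<not> (\<exists>j\<in>{1..K}. isWt (?w j)) \<Longrightarrow> (\<Sum>j=1..K. wgt (?w j)) = 0"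
    using sum_noWt[of "{1..K}" ?w] by blast
  show ?thesis
    unfolding agg_def S B L
    using a Z by (cases "?a"; cases "?w K") auto
qed

lemma fw_idx: "fw \<phi> D x e \<Longrightarrow> \<exists>K>0. (\<forall>t\<in>{1..<K}. tcontS D (it \<phi> x t)) \<and> \<not> tcontS D (it \<phi> x K) \<and> e = agg (it \<phi> x) K"
proof (induction rule: fw.induct)
  case (fw_stop x)
  then show ?case by (intro exI[of _ 1]) (simp add: agg_1)
next
  case (fw_go x e)
  then obtain K where K: "0 < K" "\<forall>t\<in>{1..<K}. tcontS D (it \<phi> (nodeOf (\<phi> x)) t)"
    "\<not> tcontS D (it \<phi> (nodeOf (\<phi> x)) K)" "e = agg (it \<phi> (nodeOf (\<phi> x))) K" by blast
  have a: "isnd (\<phi> x)" using fw_go.hyps(1) by (rule tcontS_isnd)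
  have sh: "\<And>t. 0 < t \<Longrightarrow> it \<phi> x (Suc t) = it \<phi> (nodeOf (\<phi> x)) t" using it_shift1[of \<phi> x, OF a] by blast
  have "\<forall>t\<in>{1..<Suc K}. tcontS D (it \<phi> x t)"
  proof
    fix t assume t: "t \<in> {1..<Suc K}"
    show "tcontS D (it \<phi> x t)"
    proof (cases "t = 1")
      case True
      then show ?thesis using fw_go.hyps(1) by simp
    next
      case False
      then obtain t' where "t = Suc t'" "t' \<in> {1..<K}" using t by (cases t) auto
      then show ?thesis using K(2) sh[of t'] by auto
    qed
  qed
  moreover have "\<not> tcontS D (it \<phi> x (Suc K))" using K sh by simp
  moreover have "pre (\<phi> x) e = agg (it \<phi> x) (Suc K)" using agg_step[of \<phi> x, OF a K(1)] K(4) by simp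
  ultimately show ?case by (intro exI[of _ "Suc K"]) auto
qed

lemma idx_fw: "0 < K \<Longrightarrow> (\<forall>t\<in>{1..<K}. tcontS D (it \<phi> x t)) \<Longrightarrow> \<not> tcontS D (it \<phi> x K) \<Longrightarrow> fw \<phi> D x (agg (it \<phi> x) K)"
proof (induction K arbitrary: x)
  case 0
  then show ?case by simp
next
  case (Suc K)
  show ?case
  proof (cases "K = 0")
    case True
    then have "\<not> tcontS D (\<phi> x)" using Suc.prems by simp
    then show ?thesis using fw_stop[of D \<phi> x] True by (simp add: agg_1)
  next
    case False
    have "1 \<in> {1..<Suc K}" using False by simp
    then have t1: "tcontS D (\<phi> x)" using Suc.prems(2) by (metis it_1 One_nat_def)
    have a: "isnd (\<phi> x)" using t1 by (rule tcontS_isnd)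
    have sh: "\<And>t. 0 < t \<Longrightarrow> it \<phi> x (Suc t) = it \<phi> (nodeOf (\<phi> x)) t" using it_shift1[of \<phi> x, OF a] by blast
    have "\<forall>t\<in>{1..<K}. tcontS D (it \<phi> (nodeOf (\<phi> x)) t)"
    proof
      fix t assume t: "t \<in> {1..<K}"
      then have "Suc t \<in> {1..<Suc K}" by simp
      then have "tcontS D (it \<phi> x (Suc t))" using Suc.prems(2) by blast
      then show "tcontS D (it \<phi> (nodeOf (\<phi> x)) t)" using sh[of t] t by simp
    qed
    moreover have "\<not> tcontS D (it \<phi> (nodeOf (\<phi> x)) K)" using Suc.prems(3) sh[of K] False by simp
    ultimately have "fw \<phi> D (nodeOf (\<phi> x)) (agg (it \<phi> (nodeOf (\<phi> x))) K)"
      using Suc.IH False by simp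
    from fw_go[of D \<phi> x, OF t1 this] show ?thesis
      using agg_step[of \<phi> x K, OF a] False by simp
  qed
qed

lemma rch_idx: "rch \<phi> C x y \<Longrightarrow> \<exists>j>0. (\<forall>t\<in>{1..j}. tcontS C (it \<phi> x t)) \<and> nodeOf (it \<phi> x j) = y"
proof (induction rule: rch.induct)
  case (rch_base x)
  then show ?case by (intro exI[of _ 1]) auto
next
  case (rch_step x y)
  then obtain j where j: "0 < j" "\<forall>t\<in>{1..j}. tcontS C (it \<phi> x t)" "nodeOf (it \<phi> x j) = y" by blast
  have "isnd (it \<phi> x j)" using j by (intro tcontS_isnd[of C]) auto
  then have e: "it \<phi> x (Suc j) = \<phi> y" using j(3) by (simp add: tnext_isnd it_Suc)
  have "\<forall>t\<in>{1..Suc j}. tcontS C (it \<phi> x t)"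
    using j(2) e rch_step.hyps(2) by (auto simp: le_Suc_eq)
  then show ?case using e by (intro exI[of _ "Suc j"]) auto
qed

lemma agg_Wt_sum: "agg v K = Wt w p \<Longrightarrow> (\<Sum>j=1..K. wgt (v j)) = w"
  unfolding agg_def by (cases "v K") (auto split: if_splits)

lemma agg_Nd_sum: "agg v K = Nd p \<Longrightarrow> (\<Sum>j=1..K. wgt (v j)) = 0"
  unfolding agg_def by (cases "v K") (auto split: if_splits intro: sum_noWt)

lemma agg_Nd_noWt: "agg v K = Nd p \<Longrightarrow> j \<in> {1..K} \<Longrightarrow> \<not> isWt (v j)"
  unfolding agg_def by (cases "v K") (auto split: if_splits)

lemma cyc_window:
  assumes r: "rch \<phi> C s y" and c: "cyc \<phi> C y w"
  shows "\<exists>a p. 0 < p \<and> (\<forall>t\<ge>a. it \<phi> s (t + p) = it \<phi> s t) \<and> (\<Sum>t\<in>{a..<a+p}. wgt (it \<phi> s t)) = w"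
proof -
  obtain j where j: "0 < j" "\<forall>t\<in>{1..j}. tcontS C (it \<phi> s t)" "nodeOf (it \<phi> s j) = y"
    using rch_idx[OF r] by blast
  have ij: "isnd (it \<phi> s j)" using j by (intro tcontS_isnd[of C]) auto
  have "\<exists>e. fw \<phi> (C - {y}) y e \<and> (e = Wt w y \<or> (e = Nd y \<and> w = 0))"
    using c unfolding cyc_def by (elim disjE) auto
  then obtain e where e: "fw \<phi> (C - {y}) y e" "e = Wt w y \<or> (e = Nd y \<and> w = 0)"
    by blast
  obtain K where K: "0 < K" "\<not> tcontS (C - {y}) (it \<phi> y K)" "e = agg (it \<phi> y) K"
    using fw_idx[OF e(1)] by blast
  have ie: "isnd e" "nodeOf e = y" using e(2) by auto
  have iK: "isnd (it \<phi> y K)" "nodeOf (it \<phi> y K) = y"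
    using ie K(3) by (simp_all add: agg_def)
  have sw: "(\<Sum>t=1..K. wgt (it \<phi> y t)) = w"
    using e(2)
  proof
    assume "e = Wt w y"
    then show ?thesis using K(3) agg_Wt_sum by simp
  next
    assume "e = Nd y \<and> w = 0"
    then show ?thesis using K(3) agg_Nd_sum by simp
  qed
  have shs: "\<And>t. 0 < t \<Longrightarrow> it \<phi> s (j + t) = it \<phi> y t" using it_shift[OF ij] j(3) by simp
  have shy: "\<And>t. 0 < t \<Longrightarrow> it \<phi> y (K + t) = it \<phi> y t" using it_shift[OF iK(1)] iK(2) by simp
  have per: "\<forall>t\<ge>Suc j. it \<phi> s (t + K) = it \<phi> s t"
  proof (intro allI impI)
    fix t assume t: "Suc j \<le> t"
    define t' where "t' = t - j"
    have t': "t = j + t'" "0 < t'" using t by (simp_all add: t'_def)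
    have "it \<phi> s (t + K) = it \<phi> s (j + (t' + K))" using t' by (simp add: add.assoc)
    also have "\<dots> = it \<phi> y (t' + K)" using shs t' by simp
    also have "\<dots> = it \<phi> y t'" using shy[of t'] t' by (simp add: add.commute)
    also have "\<dots> = it \<phi> s t" using shs t' by simp
    finally show "it \<phi> s (t + K) = it \<phi> s t" .
  qed
  have "(\<Sum>t\<in>{Suc j..<Suc j + K}. wgt (it \<phi> s t)) = (\<Sum>t\<in>{1 + j..<Suc K + j}. wgt (it \<phi> s t))"
    by (simp add: add.commute)
  also have "\<dots> = (\<Sum>t\<in>{1..<Suc K}. wgt (it \<phi> s (t + j)))"
    by (rule sum.shift_bounds_nat_ivl)
  also have "\<dots> = (\<Sum>t\<in>{1..K}. wgt (it \<phi> y t))"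
    using shs by (intro sum.cong) (auto simp: atLeastLessThanSuc_atLeastAtMost add.commute)
  finally have "(\<Sum>t\<in>{Suc j..<Suc j + K}. wgt (it \<phi> s t)) = w" using sw by simp
  then show ?thesis using per K(1) by (intro exI[of _ "Suc j"] exI[of _ K]) simp
qed

lemma win_shift:
  fixes x :: "nat \<Rightarrow> real"
  assumes per: "\<forall>t\<ge>a. x (t + p) = x t" and ab: "a \<le> b"
  shows "(\<Sum>t\<in>{b..<b+p}. x t) = (\<Sum>t\<in>{a..<a+p}. x t)"
  using ab
proof (induction b rule: dec_induct)
  case base
  then show ?case by simp
next
  case (step n)
  show ?case
  proof (cases "p = 0")
    case True
    then show ?thesis by simp
  next
    case False
    have "(\<Sum>t\<in>{n..<Suc (n + p)}. x t) = x n + (\<Sum>t\<in>{Suc n..<Suc (n+p)}. x t)"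
      using False by (intro sum.atLeast_Suc_lessThan) simp
    moreover have "(\<Sum>t\<in>{n..<Suc (n + p)}. x t) = (\<Sum>t\<in>{n..<n+p}. x t) + x (n + p)"
      by (intro sum.atLeastLessThan_Suc) simp
    moreover have "x (n + p) = x n" using per step.hyps(1) by simp
    ultimately show ?thesis using step.IH by simp
  qed
qed

lemma win_mult:
  fixes x :: "nat \<Rightarrow> real"
  assumes per: "\<forall>t\<ge>a. x (t + p) = x t" and ab: "a \<le> b"
  shows "(\<Sum>t\<in>{b..<b+k*p}. x t) = real k * (\<Sum>t\<in>{a..<a+p}. x t)"
proof (induction k)
  case 0
  then show ?case by simp
next
  case (Suc k)
  have "(\<Sum>t\<in>{b..<b+Suc k*p}. x t) = (\<Sum>t\<in>{b..<b+k*p}. x t) + (\<Sum>t\<in>{b+k*p..<b+k*p+p}. x t)"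
  proof -
    have eq: "b + Suc k * p = b + k * p + p" by simp
    show ?thesis unfolding eq by (rule sum.atLeastLessThan_concat[symmetric]) simp_all
  qed
  also have "(\<Sum>t\<in>{b+k*p..<b+k*p+p}. x t) = (\<Sum>t\<in>{a..<a+p}. x t)"
    using win_shift[OF per, of "b + k*p"] ab by (simp add: ac_simps)
  finally show ?case using Suc.IH by (simp add: algebra_simps)
qed

lemma win_sign:
  fixes x :: "nat \<Rightarrow> real"
  assumes per1: "\<forall>t\<ge>a. x (t + p) = x t" and p: "0 < p"
    and per2: "\<forall>t\<ge>a'. x (t + p') = x t" and p': "0 < p'"
  shows "(0 \<le> (\<Sum>t\<in>{a..<a+p}. x t)) = (0 \<le> (\<Sum>t\<in>{a'..<a'+p'}. x t))"
proof -
  let ?b = "max a a'"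
  have "(\<Sum>t\<in>{?b..<?b+p'*p}. x t) = real p' * (\<Sum>t\<in>{a..<a+p}. x t)"
    using win_mult[OF per1, of ?b p'] by simp
  moreover have "(\<Sum>t\<in>{?b..<?b+p*p'}. x t) = real p * (\<Sum>t\<in>{a'..<a'+p'}. x t)"
    using win_mult[OF per2, of ?b p] by simp
  ultimately have "real p' * (\<Sum>t\<in>{a..<a+p}. x t) = real p * (\<Sum>t\<in>{a'..<a'+p'}. x t)"
    by (simp add: mult.commute)
  moreover have "(0 \<le> (\<Sum>t\<in>{a..<a+p}. x t)) = (0 \<le> real p' * (\<Sum>t\<in>{a..<a+p}. x t))"
    using p' by (simp add: zero_le_mult_iff)
  moreover have "(0 \<le> (\<Sum>t\<in>{a'..<a'+p'}. x t)) = (0 \<le> real p * (\<Sum>t\<in>{a'..<a'+p'}. x t))"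
    using p by (simp add: zero_le_mult_iff)
  ultimately show ?thesis by simp
qed

lemma cyc_sign:
  assumes "rch \<phi> C s y1" "cyc \<phi> C y1 w1" "rch \<phi> C s y2" "cyc \<phi> C y2 w2"
  shows "(0 \<le> w1) = (0 \<le> w2)"
proof -
  obtain a p where A: "0 < p" "\<forall>t\<ge>a. it \<phi> s (t + p) = it \<phi> s t" "(\<Sum>t\<in>{a..<a+p}. wgt (it \<phi> s t)) = w1"
    using cyc_window[OF assms(1,2)] by blast
  obtain a' p' where B: "0 < p'" "\<forall>t\<ge>a'. it \<phi> s (t + p') = it \<phi> s t" "(\<Sum>t\<in>{a'..<a'+p'}. wgt (it \<phi> s t)) = w2"
    using cyc_window[OF assms(3,4)] by blast
  have "\<forall>t\<ge>a. wgt (it \<phi> s (t + p)) = wgt (it \<phi> s t)" using A(2) by simp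
  moreover have "\<forall>t\<ge>a'. wgt (it \<phi> s (t + p')) = wgt (it \<phi> s t)" using B(2) by simp
  ultimately show ?thesis using win_sign[of a "\<lambda>t. wgt (it \<phi> s t)" p a' p'] A B by simp
qed

lemma isgn_eq: "rch \<phi> C s y \<Longrightarrow> cyc \<phi> C y w \<Longrightarrow> isgn \<phi> C s = (if 0 \<le> w then EStar else AStar)"
proof -
  assume a: "rch \<phi> C s y" "cyc \<phi> C y w"
  have "(\<exists>y w. rch \<phi> C s y \<and> cyc \<phi> C y w \<and> 0 \<le> w) = (0 \<le> w)"
  proof
    assume "\<exists>y w. rch \<phi> C s y \<and> cyc \<phi> C y w \<and> 0 \<le> w"
    then obtain y' w' where "rch \<phi> C s y'" "cyc \<phi> C y' w'" "0 \<le> w'" by blast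
    then show "0 \<le> w" using cyc_sign[OF a] by blast
  next
    assume "0 \<le> w"
    then show "\<exists>y w. rch \<phi> C s y \<and> cyc \<phi> C y w \<and> 0 \<le> w" using a by blast
  qed
  then show ?thesis unfolding isgn_def by simp
qed


lemma fw_Nd_pre: "pre a e = Nd p \<Longrightarrow> isnd a \<Longrightarrow> (\<exists>k. a = Nd k) \<and> e = Nd p"
  by (cases a; cases e) auto

lemma cat:
  "fw \<phi> C0 s x \<Longrightarrow> C0 \<subseteq> C \<Longrightarrow> tcontS C x \<Longrightarrow> wres \<phi> C s = pre x (wres \<phi> C (nodeOf x))"
proof (induction rule: fw.induct)
  case (fw_stop s)
  then show ?case using wres_step[of \<phi> C s] by simp
next
  case (fw_go s e)
  have t: "tcontS C (\<phi> s)" using fw_go.hyps(1) fw_go.prems(1) by (auto simp: tcontS_iff)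
  have ie: "isnd e" using fw_go.prems(2) tcontS_isnd by simp
  have "wres \<phi> C s = pre (\<phi> s) (wres \<phi> C (nodeOf (\<phi> s)))" using wres_step[of \<phi> C s] t by simp
  also have "\<dots> = pre (\<phi> s) (pre e (wres \<phi> C (nodeOf e)))" using fw_go by simp
  also have "\<dots> = pre (pre (\<phi> s) e) (wres \<phi> C (nodeOf e))" using pre_assoc[OF ie] by simp
  finally show ?case by simp
qed

lemma fs_step:
  assumes f: "fw \<psi> D k e" and h: "\<psi> s = pre a (\<psi> k)"
  shows "fw \<psi> D s (pre a e)"
  using f
proof cases
  case fw_stop
  then have "\<not> tcontS D (\<psi> s)" using h by simp
  then show ?thesis using fw.fw_stop[of D \<psi> s] h fw_stop by simp
next
  case (fw_go e')
  have ib: "isnd (\<psi> k)" using fw_go tcontS_isnd by blast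
  have "tcontS D (\<psi> s)" using h fw_go by simp
  moreover have "nodeOf (\<psi> s) = nodeOf (\<psi> k)" using h by simp
  ultimately have "fw \<psi> D s (pre (\<psi> s) e')" using fw.fw_go[of D \<psi> s e'] fw_go by simp
  then show ?thesis using h fw_go pre_assoc[OF ib] by simp
qed

lemma comp_fw1: "fw \<phi> C s e \<Longrightarrow> C0 \<subseteq> C \<Longrightarrow> fw (wres \<phi> C0) (C - C0) s e"
proof (induction rule: fw.induct)
  case (fw_stop s)
  then have "\<not> tcontS C0 (\<phi> s)" by (auto simp: tcontS_iff)
  then have w: "wres \<phi> C0 s = \<phi> s" using wres_step[of \<phi> C0 s] by simp
  have "\<not> tcontS (C - C0) (\<phi> s)" using fw_stop.hyps by (auto simp: tcontS_iff)
  then show ?case using fw.fw_stop[of "C - C0" "wres \<phi> C0" s] w by simp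
next
  case (fw_go s e)
  let ?k = "nodeOf (\<phi> s)"
  have IH: "fw (wres \<phi> C0) (C - C0) ?k e" using fw_go by simp
  show ?case
  proof (cases "?k \<in> C0")
    case True
    then have "tcontS C0 (\<phi> s)" using fw_go.hyps(1) by (auto simp: tcontS_iff)
    then have "wres \<phi> C0 s = pre (\<phi> s) (wres \<phi> C0 ?k)" using wres_step[of \<phi> C0 s] by simp
    then show ?thesis using fs_step[OF IH] by simp
  next
    case False
    then have "\<not> tcontS C0 (\<phi> s)" by (auto simp: tcontS_iff)
    then have w: "wres \<phi> C0 s = \<phi> s" using wres_step[of \<phi> C0 s] by simp
    have "tcontS (C - C0) (wres \<phi> C0 s)" using w False fw_go.hyps(1) by (auto simp: tcontS_iff)
    from fw.fw_go[of "C - C0" "wres \<phi> C0" s e, OF this] IH w show ?thesis by simp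
  qed
qed

lemma lift_cyc:
  assumes "rch \<phi> C0 s y" "cyc \<phi> C0 y w" "C0 \<subseteq> C"
  shows "rch \<phi> C s y" "cyc \<phi> C y w"
  using assms rch_mono cyc_mono by blast+

lemma comp_fw2: "fw \<psi> (C - C0) s e \<Longrightarrow> \<psi> = wres \<phi> C0 \<Longrightarrow> C0 \<subseteq> C \<Longrightarrow> finite C \<Longrightarrow> wres \<phi> C s = e"
proof (induction rule: fw.induct)
  case (fw_stop s)
  show ?case
  proof (cases "\<exists>e'. fw \<phi> C0 s e'")
    case True
    then obtain e' where e': "fw \<phi> C0 s e'" by blast
    then have ps: "\<psi> s = e'" using wres_fw fw_stop.prems by simp
    have "\<not> tcontS C0 e'" using fw_not_tcont[OF e'] .
    then have "\<not> tcontS C e'" using fw_stop.hyps ps by (auto simp: tcontS_iff)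
    then have "fw \<phi> C s e'" using fw_mono[OF e' fw_stop.prems(2)] by simp
    then show ?thesis using wres_fw ps by simp
  next
    case False
    then have ps: "\<psi> s = isgn \<phi> C0 s" using wres_div fw_stop.prems by simp
    have nf: "\<not> (\<exists>e. fw \<phi> C s e)" using False fw_sub fw_stop.prems(2) by blast
    have fC0: "finite C0" using fw_stop.prems finite_subset by blast
    obtain y w where yw: "rch \<phi> C0 s y" "cyc \<phi> C0 y w" using D1[OF fC0, of \<phi> s] False by blast
    have yw2: "rch \<phi> C s y" "cyc \<phi> C y w" using lift_cyc[OF yw fw_stop.prems(2)] by simp_all
    show ?thesis using wres_div[OF nf] ps isgn_eq[OF yw(1,2)] isgn_eq[OF yw2(1,2)] by simp
  qed
next
  case (fw_go s e)
  let ?b = "\<psi> s"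
  have ib: "isnd ?b" using fw_go.hyps(1) tcontS_isnd by blast
  then have "fw \<phi> C0 s ?b" using wres_isnd[of \<phi> C0 s] fw_go.prems(1) by simp
  moreover have "tcontS C ?b" using fw_go.hyps(1) by (auto simp: tcontS_iff)
  ultimately have "wres \<phi> C s = pre ?b (wres \<phi> C (nodeOf ?b))" using cat fw_go.prems(2) by blast
  then show ?case using fw_go.IH fw_go.prems by simp
qed

lemma rch_comp: "rch \<psi> (C - C0) s y \<Longrightarrow> \<psi> = wres \<phi> C0 \<Longrightarrow> C0 \<subseteq> C \<Longrightarrow> rch \<phi> C s y"
proof (induction rule: rch.induct)
  case (rch_base x)
  have ib: "isnd (\<psi> x)" using rch_base.hyps tcontS_isnd by blast
  then have f: "fw \<phi> C0 x (\<psi> x)" using wres_isnd[of \<phi> C0 x] rch_base.prems(1) by simp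
  have "tcontS C (\<psi> x)" using rch_base.hyps by (auto simp: tcontS_iff)
  from fw_rch[OF f rch_base.prems(2) this] show ?case .
next
  case (rch_step x y)
  have ib: "isnd (\<psi> y)" using rch_step.hyps tcontS_isnd by blast
  then have f: "fw \<phi> C0 y (\<psi> y)" using wres_isnd[of \<phi> C0 y] rch_step.prems(1) by simp
  have "tcontS C (\<psi> y)" using rch_step.hyps by (auto simp: tcontS_iff)
  from fw_rch[OF f rch_step.prems(2) this] have "rch \<phi> C y (nodeOf (\<psi> y))" .
  then show ?case using rch_trans rch_step by blast
qed

theorem compression:
  assumes fin: "finite C" and sub: "C0 \<subseteq> C"
  shows "wres (wres \<phi> C0) (C - C0) s = wres \<phi> C s"
proof (cases "\<exists>e. fw (wres \<phi> C0) (C - C0) s e")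
  case True
  then obtain e where e: "fw (wres \<phi> C0) (C - C0) s e" by blast
  then show ?thesis using comp_fw2[OF e refl sub fin] wres_fw[OF e] by simp
next
  case False
  let ?\<psi> = "wres \<phi> C0"
  have nf: "\<not> (\<exists>e. fw \<phi> C s e)" using False comp_fw1 sub by blast
  have "finite (C - C0)" using fin by simp
  then obtain y w where yw: "rch ?\<psi> (C - C0) s y" "cyc ?\<psi> (C - C0) y w" using D1[of "C - C0" ?\<psi> s] False by blast
  have yC: "y \<in> C - C0" using rch_in[OF yw(1)] .
  have r: "rch \<phi> C s y" using rch_comp[OF yw(1) refl sub] .
  have "\<exists>e. fw ?\<psi> ((C - C0) - {y}) y e \<and> (e = Wt w y \<or> (e = Nd y \<and> w = 0))"
    using yw(2) unfolding cyc_def by (elim disjE) auto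
  then obtain e where e: "fw ?\<psi> ((C - {y}) - C0) y e" "e = Wt w y \<or> (e = Nd y \<and> w = 0)"
    by (metis Diff_insert Diff_insert2)
  have sub2: "C0 \<subseteq> C - {y}" using sub yC by blast
  have "wres \<phi> (C - {y}) y = e" using comp_fw2[OF e(1) refl sub2] fin by simp
  moreover have "isnd e" using e(2) by auto
  ultimately have "fw \<phi> (C - {y}) y e" using wres_isnd by metis
  then have c: "cyc \<phi> C y w" using e(2) unfolding cyc_def by auto
  show ?thesis using wres_div[OF False] wres_div[OF nf] isgn_eq[OF yw] isgn_eq[OF r c] by simp
qed


definition mapn :: "(nat \<Rightarrow> nat) \<Rightarrow> tval \<Rightarrow> tval" where
  "mapn \<rho> x = (case x of Nd k \<Rightarrow> Nd (\<rho> k) | Wt r k \<Rightarrow> Wt r (\<rho> k) | EStar \<Rightarrow> EStar | AStar \<Rightarrow> AStar)"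

lemma mapn_simps[simp]: "mapn \<rho> (Nd k) = Nd (\<rho> k)" "mapn \<rho> (Wt r k) = Wt r (\<rho> k)"
  "mapn \<rho> EStar = EStar" "mapn \<rho> AStar = AStar"
  by (simp_all add: mapn_def)

lemma mapn_isnd[simp]: "isnd (mapn \<rho> x) = isnd x"
  by (cases x) auto

lemma mapn_node: "isnd x \<Longrightarrow> nodeOf (mapn \<rho> x) = \<rho> (nodeOf x)"
  by (cases x) auto

lemma mapn_pre: "isnd b \<Longrightarrow> pre (mapn \<rho> b) (mapn \<rho> e) = mapn \<rho> (pre b e)"
  by (cases b; cases e) auto

lemma pre_Nd0[simp]: "pre (Nd 0) e = e"
  by simp

lemma tcontS_mapn: "inj \<rho> \<Longrightarrow> tcontS (\<rho> ` D) (mapn \<rho> x) = tcontS D x"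
  by (cases x) (auto simp: inj_image_mem_iff)

lemma sim_fw:
  assumes inj: "inj \<rho>" and h: "\<forall>x\<in>D'. \<phi> (\<rho> x) = mapn \<rho> (\<phi>' x)"
  shows "fw \<phi>' D' x e \<Longrightarrow> \<phi> z = pre a (mapn \<rho> (\<phi>' x)) \<Longrightarrow> isnd a \<Longrightarrow> fw \<phi> (\<rho> ` D') z (pre a (mapn \<rho> e))"
proof (induction arbitrary: z a rule: fw.induct)
  case (fw_stop x)
  have "\<not> tcontS (\<rho> ` D') (\<phi> z)" using fw_stop tcontS_mapn[OF inj] by simp
  then show ?case using fw.fw_stop[of "\<rho> ` D'" \<phi> z] fw_stop by simp
next
  case (fw_go x e)
  let ?b = "\<phi>' x" and ?k = "nodeOf (\<phi>' x)"
  have ib: "isnd ?b" using fw_go.hyps(1) tcontS_isnd by blast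
  have kD: "?k \<in> D'" using fw_go.hyps(1) by (simp add: tcontS_iff)
  have "\<phi> (\<rho> ?k) = pre (Nd 0) (mapn \<rho> (\<phi>' ?k))" using h kD by simp
  then have IH: "fw \<phi> (\<rho> ` D') (\<rho> ?k) (mapn \<rho> e)" using fw_go.IH[where z="\<rho> ?k" and a="Nd 0"] by simp
  have t: "tcontS (\<rho> ` D') (\<phi> z)" using fw_go.prems(1) fw_go.hyps(1) tcontS_mapn[OF inj] by simp
  have n: "nodeOf (\<phi> z) = \<rho> ?k" using fw_go.prems(1) mapn_node[OF ib] by simp
  have "fw \<phi> (\<rho> ` D') z (pre (\<phi> z) (mapn \<rho> e))" using fw.fw_go[of "\<rho> ` D'" \<phi> z, OF t] IH n by simp
  moreover have "pre (\<phi> z) (mapn \<rho> e) = pre a (mapn \<rho> (pre ?b e))"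
    using fw_go.prems(1) pre_assoc[of "mapn \<rho> ?b" a "mapn \<rho> e"] ib mapn_pre[OF ib] by simp
  ultimately show ?case by simp
qed

lemma sim_fw_conv:
  assumes inj: "inj \<rho>" and h: "\<forall>x\<in>D'. \<phi> (\<rho> x) = mapn \<rho> (\<phi>' x)"
  shows "fw \<phi> (\<rho> ` D') z e \<Longrightarrow> \<phi> z = pre a (mapn \<rho> (\<phi>' x)) \<Longrightarrow> isnd a \<Longrightarrow> \<exists>e'. fw \<phi>' D' x e'"
proof (induction arbitrary: x a rule: fw.induct)
  case (fw_stop z)
  then have "\<not> tcontS D' (\<phi>' x)" using tcontS_mapn[OF inj] by simp
  then show ?case using fw.fw_stop by blast
next
  case (fw_go z e)
  then have t: "tcontS D' (\<phi>' x)" using tcontS_mapn[OF inj] by simp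
  have ib: "isnd (\<phi>' x)" using t tcontS_isnd by blast
  let ?k = "nodeOf (\<phi>' x)"
  have kD: "?k \<in> D'" using t by (simp add: tcontS_iff)
  have n: "nodeOf (\<phi> z) = \<rho> ?k" using fw_go.prems(1) mapn_node[OF ib] by simp
  have "\<phi> (\<rho> ?k) = pre (Nd 0) (mapn \<rho> (\<phi>' ?k))" using h kD by simp
  then obtain e' where "fw \<phi>' D' ?k e'" using fw_go.IH[where x="?k" and a="Nd 0"] n by auto
  then show ?case using fw.fw_go[of D' \<phi>' x, OF t] by blast
qed

lemma sim_rch:
  assumes inj: "inj \<rho>" and h: "\<forall>x\<in>C'. \<phi> (\<rho> x) = mapn \<rho> (\<phi>' x)"
  shows "rch \<phi>' C' x y \<Longrightarrow> \<phi> z = pre a (mapn \<rho> (\<phi>' x)) \<Longrightarrow> rch \<phi> (\<rho> ` C') z (\<rho> y)"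
proof (induction rule: rch.induct)
  case (rch_base x)
  have ib: "isnd (\<phi>' x)" using rch_base.hyps tcontS_isnd by blast
  have t: "tcontS (\<rho> ` C') (\<phi> z)" using rch_base tcontS_mapn[OF inj] by simp
  have "nodeOf (\<phi> z) = \<rho> (nodeOf (\<phi>' x))" using rch_base.prems mapn_node[OF ib] by simp
  then show ?case using rch.rch_base[of "\<rho> ` C'" \<phi> z, OF t] by simp
next
  case (rch_step x y)
  have yC: "y \<in> C'" using rch_in[OF rch_step.hyps(1)] .
  have ib: "isnd (\<phi>' y)" using rch_step.hyps tcontS_isnd by blast
  have e: "\<phi> (\<rho> y) = mapn \<rho> (\<phi>' y)" using h yC by simp
  have t: "tcontS (\<rho> ` C') (\<phi> (\<rho> y))" using e rch_step.hyps(2) tcontS_mapn[OF inj] by simp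
  have "nodeOf (\<phi> (\<rho> y)) = \<rho> (nodeOf (\<phi>' y))" using e mapn_node[OF ib] by simp
  then show ?case using rch.rch_step[OF rch_step.IH[OF rch_step.prems] t] by simp
qed

lemma sim_cyc:
  assumes inj: "inj \<rho>" and h: "\<forall>x\<in>C'. \<phi> (\<rho> x) = mapn \<rho> (\<phi>' x)"
    and c: "cyc \<phi>' C' y w" and yC: "y \<in> C'"
  shows "cyc \<phi> (\<rho> ` C') (\<rho> y) w"
proof -
  have h': "\<forall>x\<in>C' - {y}. \<phi> (\<rho> x) = mapn \<rho> (\<phi>' x)" using h by blast
  have e: "\<phi> (\<rho> y) = pre (Nd 0) (mapn \<rho> (\<phi>' y))" using h yC by simp
  have im: "\<rho> ` (C' - {y}) = \<rho> ` C' - {\<rho> y}" using inj by (simp add: image_set_diff)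
  have "\<exists>e. fw \<phi>' (C' - {y}) y e \<and> (e = Wt w y \<or> (e = Nd y \<and> w = 0))"
    using c unfolding cyc_def by (elim disjE) auto
  then obtain e where e1: "fw \<phi>' (C' - {y}) y e" "e = Wt w y \<or> (e = Nd y \<and> w = 0)" by blast
  have "fw \<phi> (\<rho> ` (C' - {y})) (\<rho> y) (pre (Nd 0) (mapn \<rho> e))"
    using sim_fw[OF inj h' e1(1) e] by simp
  then have "fw \<phi> (\<rho> ` C' - {\<rho> y}) (\<rho> y) (mapn \<rho> e)" using im by simp
  then show ?thesis using e1(2) unfolding cyc_def by auto
qed

theorem sim_wres:
  assumes inj: "inj \<rho>" and h: "\<forall>x\<in>C'. \<phi> (\<rho> x) = mapn \<rho> (\<phi>' x)" and fin: "finite C'"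
    and s: "\<phi> s = pre a (mapn \<rho> (\<phi>' s'))" and a: "isnd a"
  shows "wres \<phi> (\<rho> ` C') s = pre a (mapn \<rho> (wres \<phi>' C' s'))"
proof (cases "\<exists>e. fw \<phi>' C' s' e")
  case True
  then obtain e where e: "fw \<phi>' C' s' e" by blast
  show ?thesis using sim_fw[OF inj h e s a] wres_fw e by metis
next
  case False
  have nf: "\<not> (\<exists>e. fw \<phi> (\<rho> ` C') s e)" using sim_fw_conv[OF inj h _ s a] False by blast
  obtain y w where yw: "rch \<phi>' C' s' y" "cyc \<phi>' C' y w" using D1[OF fin, of \<phi>' s'] False by blast
  have r: "rch \<phi> (\<rho> ` C') s (\<rho> y)" using sim_rch[OF inj h yw(1) s] .
  have c: "cyc \<phi> (\<rho> ` C') (\<rho> y) w" using sim_cyc[OF inj h yw(2) rch_in[OF yw(1)]] .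
  show ?thesis using wres_div[OF False] wres_div[OF nf] isgn_eq[OF yw] isgn_eq[OF r c] by simp
qed

definition post :: "(nat \<Rightarrow> tval) \<Rightarrow> tval \<Rightarrow> tval" where
  "post H x = (if isnd x then pre x (H (nodeOf x)) else x)"

lemma post_star[simp]: "post H EStar = EStar" "post H AStar = AStar"
  by (simp_all add: post_def)

lemma comp_post: "comp f g i = post g (f i)"
  unfolding comp_def post_def by (cases "f i"; cases "g (nodeOf (f i))") auto

lemma post_pre: "isnd a \<Longrightarrow> post H (pre a e) = pre a (post H e)"
  unfolding post_def by (cases a; cases e; cases "H (nodeOf e)") (auto simp: add.assoc)

lemma post_id: "isnd a \<Longrightarrow> H (nodeOf a) = Nd (nodeOf a) \<Longrightarrow> post H a = a"
  unfolding post_def by (cases a) auto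

locale postloc =
  fixes f H :: "nat \<Rightarrow> tval" and C X :: "nat set"
  assumes Hid: "\<forall>y\<in>C. H y = Nd y"
    and Hex: "\<forall>x\<in>X. isnd (f x) \<longrightarrow> nodeOf (f x) \<notin> C \<longrightarrow> \<not> tcontS C (H (nodeOf (f x)))"
    and CX: "C \<subseteq> X"
begin

definition "\<Psi> = (\<lambda>y. post H (f y))"

lemma Psi_eq: "tcontS C (f x) \<Longrightarrow> \<Psi> x = f x"
  unfolding \<Psi>_def using Hid by (intro post_id) (auto simp: tcontS_iff)

lemma Psi_tc: "x \<in> X \<Longrightarrow> tcontS D (\<Psi> x) \<Longrightarrow> D \<subseteq> C \<Longrightarrow> tcontS C (f x)"
proof (rule ccontr)
  assume a: "x \<in> X" "tcontS D (\<Psi> x)" "D \<subseteq> C" "\<not> tcontS C (f x)"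
  show False
  proof (cases "isnd (f x)")
    case True
    then have "nodeOf (f x) \<notin> C" using a(4) by (simp add: tcontS_iff)
    then have "\<not> tcontS C (H (nodeOf (f x)))" using Hex a(1) True by blast
    then have "\<not> tcontS C (\<Psi> x)" unfolding \<Psi>_def post_def using True by simp
    then show False using a(2,3) by (auto simp: tcontS_iff)
  next
    case False
    then show False using a(2) unfolding \<Psi>_def post_def by (simp add: tcontS_iff)
  qed
qed

lemma post_fw: "fw f D x e \<Longrightarrow> D \<subseteq> C \<Longrightarrow> x \<in> X \<Longrightarrow> fw \<Psi> D x (post H e)"
proof (induction rule: fw.induct)
  case (fw_stop x)
  have "\<not> tcontS D (\<Psi> x)"
  proof
    assume "tcontS D (\<Psi> x)"
    then have "tcontS C (f x)" using Psi_tc fw_stop by blast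
    then have "\<Psi> x = f x" by (rule Psi_eq)
    then show False using fw_stop \<open>tcontS D (\<Psi> x)\<close> by simp
  qed
  then show ?case using fw.fw_stop[of D \<Psi> x] by (simp add: \<Psi>_def)
next
  case (fw_go x e)
  have t: "tcontS C (f x)" using fw_go by (auto simp: tcontS_iff)
  then have P: "\<Psi> x = f x" by (rule Psi_eq)
  have "nodeOf (f x) \<in> X" using fw_go.hyps(1) fw_go.prems(1) CX by (auto simp: tcontS_iff)
  then have "fw \<Psi> D (nodeOf (f x)) (post H e)" using fw_go by simp
  then have "fw \<Psi> D x (pre (f x) (post H e))" using fw.fw_go[of D \<Psi> x] P fw_go.hyps(1) by simp
  then show ?case using post_pre[of "f x" H e] fw_go.hyps(1) tcontS_isnd by auto
qed

lemma post_fw_conv: "fw \<Psi> D x e \<Longrightarrow> D \<subseteq> C \<Longrightarrow> x \<in> X \<Longrightarrow> \<exists>e'. fw f D x e'"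
proof (induction rule: fw.induct)
  case (fw_stop x)
  have "\<not> tcontS D (f x)"
  proof
    assume a: "tcontS D (f x)"
    then have "tcontS C (f x)" using fw_stop by (auto simp: tcontS_iff)
    then have "\<Psi> x = f x" by (rule Psi_eq)
    then show False using fw_stop a by simp
  qed
  then show ?case using fw.fw_stop by blast
next
  case (fw_go x e)
  have "tcontS C (f x)" using Psi_tc fw_go by blast
  then have P: "\<Psi> x = f x" by (rule Psi_eq)
  have "nodeOf (f x) \<in> X" using fw_go.hyps(1) fw_go.prems(1) CX P by (auto simp: tcontS_iff)
  then obtain e' where "fw f D (nodeOf (f x)) e'" using fw_go P by auto
  then show ?case using fw.fw_go[of D f x] fw_go.hyps(1) P by auto
qed

lemma post_rch: "rch f C x y \<Longrightarrow> rch \<Psi> C x y"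
proof (induction rule: rch.induct)
  case (rch_base x)
  then show ?case using rch.rch_base[of C \<Psi> x] Psi_eq by simp
next
  case (rch_step x y)
  then show ?case using rch.rch_step[of \<Psi> C x y] Psi_eq by simp
qed

lemma post_cyc: "cyc f C y w \<Longrightarrow> y \<in> C \<Longrightarrow> cyc \<Psi> C y w"
proof -
  assume c: "cyc f C y w" and yC: "y \<in> C"
  have "\<exists>e. fw f (C - {y}) y e \<and> (e = Wt w y \<or> (e = Nd y \<and> w = 0))"
    using c unfolding cyc_def by (elim disjE) auto
  then obtain e where e1: "fw f (C - {y}) y e" "e = Wt w y \<or> (e = Nd y \<and> w = 0)" by blast
  have "fw \<Psi> (C - {y}) y (post H e)" using post_fw[OF e1(1)] yC CX by auto
  moreover have "post H e = e" using e1(2) Hid yC by (auto intro: post_id)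
  ultimately show ?thesis using e1(2) unfolding cyc_def by auto
qed

theorem post_wres: "finite C \<Longrightarrow> s \<in> X \<Longrightarrow> wres \<Psi> C s = post H (wres f C s)"
proof -
  assume fin: "finite C" and sX: "s \<in> X"
  show ?thesis
  proof (cases "\<exists>e. fw f C s e")
    case True
    then obtain e where e: "fw f C s e" by blast
    then show ?thesis using post_fw[OF e _ sX] wres_fw by (metis order_refl)
  next
    case False
    have nf: "\<not> (\<exists>e. fw \<Psi> C s e)" using post_fw_conv[OF _ _ sX] False by blast
    obtain y w where yw: "rch f C s y" "cyc f C y w" using D1[OF fin, of f s] False by blast
    have r: "rch \<Psi> C s y" using post_rch[OF yw(1)] .
    have c: "cyc \<Psi> C y w" using post_cyc[OF yw(2) rch_in[OF yw(1)]] .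
    have "isgn f C s = EStar \<or> isgn f C s = AStar" by (rule isgn_star)
    then show ?thesis using wres_div[OF False] wres_div[OF nf] isgn_eq[OF yw] isgn_eq[OF r c] by auto
  qed
qed

end

lemma fw_range: "fw \<phi> D x e \<Longrightarrow> (\<forall>z\<in>D \<union> {x}. in_T N (\<phi> z)) \<Longrightarrow> in_T N e"
proof (induction rule: fw.induct)
  case (fw_stop x)
  then show ?case by simp
next
  case (fw_go x e)
  have "nodeOf (\<phi> x) \<in> D" using fw_go.hyps(1) by (simp add: tcontS_iff)
  then have "in_T N e" using fw_go by simp
  then show ?case by (cases "\<phi> x"; cases e) (auto simp: in_T_def)
qed

lemma wres_range: "\<forall>z\<in>C \<union> {s}. in_T N (\<phi> z) \<Longrightarrow> in_T N (wres \<phi> C s)"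
proof (cases "\<exists>e. fw \<phi> C s e")
  case True
  then obtain e where "fw \<phi> C s e" by blast
  moreover assume "\<forall>z\<in>C \<union> {s}. in_T N (\<phi> z)"
  ultimately show ?thesis using fw_range wres_fw by metis
next
  case False
  then show ?thesis using wres_div isgn_star[of \<phi> C s] by (auto simp: in_T_def)
qed

lemma wres_exit: "isnd (wres \<phi> C s) \<Longrightarrow> nodeOf (wres \<phi> C s) \<notin> C"
  using wres_isnd fw_not_tcont tcontS_iff by metis

lemma rch_start: "rch \<phi> C x y \<Longrightarrow> tcontS C (\<phi> x)"
  by (induction rule: rch.induct) auto

definition realz :: "(nat \<Rightarrow> tval) \<Rightarrow> nat set \<Rightarrow> bool" where
  "realz \<phi> D = (\<forall>a\<in>D. \<forall>k. \<phi> a = Nd k \<longrightarrow> (\<forall>b\<in>D - {a}. \<not> (isnd (\<phi> b) \<and> nodeOf (\<phi> b) = k)))"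

lemma realz_D: "realz \<phi> D \<Longrightarrow> a \<in> D \<Longrightarrow> b \<in> D \<Longrightarrow> \<phi> a = Nd k \<Longrightarrow> isnd (\<phi> b) \<Longrightarrow> nodeOf (\<phi> b) = k \<Longrightarrow> a = b"
  unfolding realz_def by blast

lemma RB_base:
  assumes R: "realz \<phi> D" and CD: "C \<subseteq> D" and xD: "x \<in> D" and fx: "\<phi> x = Nd p" and pC: "p \<notin> C"
  shows "fw \<phi> C x' e' \<Longrightarrow> x' \<in> D \<Longrightarrow> isnd e' \<Longrightarrow> nodeOf e' = p \<Longrightarrow> x' = x \<or> rch \<phi> C x' x \<or> rch \<phi> C x x'"
proof (induction rule: fw.induct)
  case (fw_stop x')
  then have "x = x'" using realz_D[OF R xD _ fx] by blast
  then show ?case by simp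
next
  case (fw_go x' e)
  let ?k = "nodeOf (\<phi> x')"
  have kD: "?k \<in> D" using fw_go.hyps(1) CD by (auto simp: tcontS_iff)
  have "?k = x \<or> rch \<phi> C ?k x \<or> rch \<phi> C x ?k" using fw_go kD by simp
  moreover have "\<not> rch \<phi> C x ?k" using rch_start fx pC by fastforce
  moreover have "rch \<phi> C x' ?k" using rch_base[of C \<phi> x', OF fw_go.hyps(1)] .
  ultimately show ?case using rch_trans by blast
qed

lemma RB:
  assumes R: "realz \<phi> D" and CD: "C \<subseteq> D"
  shows "fw \<phi> C x e \<Longrightarrow> e = Nd p \<Longrightarrow> x \<in> D \<Longrightarrow>
    (\<forall>x'\<in>D. \<forall>e'. fw \<phi> C x' e' \<longrightarrow> isnd e' \<longrightarrow> nodeOf e' = p \<longrightarrow> (x' = x \<or> rch \<phi> C x' x \<or> rch \<phi> C x x'))"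
proof (induction rule: fw.induct)
  case (fw_stop x)
  then have "\<not> tcontS C (Nd p)" by simp
  then have pC: "p \<notin> C" by simp
  show ?case using RB_base[OF R CD fw_stop.prems(2) fw_stop.prems(1) pC] by blast
next
  case (fw_go x e)
  have ia: "isnd (\<phi> x)" using fw_go.hyps(1) tcontS_isnd by blast
  obtain k where k: "\<phi> x = Nd k" and eN: "e = Nd p" using fw_Nd_pre[OF fw_go.prems(1) ia] by blast
  have kC: "k \<in> C" using fw_go.hyps(1) k by simp
  have kD: "k \<in> D" using kC CD by blast
  have IH: "\<forall>x'\<in>D. \<forall>e'. fw \<phi> C x' e' \<longrightarrow> isnd e' \<longrightarrow> nodeOf e' = p \<longrightarrow> (x' = k \<or> rch \<phi> C x' k \<or> rch \<phi> C k x')"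
    using fw_go.IH eN kD k by simp
  have rxk: "rch \<phi> C x k" using rch_base[of C \<phi> x, OF fw_go.hyps(1)] k by simp
  show ?case
  proof (intro ballI allI impI)
    fix x' e' assume x'D: "x' \<in> D" and f': "fw \<phi> C x' e'" "isnd e'" "nodeOf e' = p"
    have "x' = k \<or> rch \<phi> C x' k \<or> rch \<phi> C k x'" using IH x'D f' by blast
    then show "x' = x \<or> rch \<phi> C x' x \<or> rch \<phi> C x x'"
    proof (elim disjE)
      assume "x' = k" then show ?thesis using rxk by simp
    next
      assume "rch \<phi> C k x'" then show ?thesis using rxk rch_trans by blast
    next
      assume "rch \<phi> C x' k"
      then show ?thesis
      proof cases
        case rch_base
        then have "x = x'" using realz_D[OF R fw_go.prems(2) x'D k] tcontS_isnd by blast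
        then show ?thesis by simp
      next
        case (rch_step y)
        have ry: "rch \<phi> C x' y" and ty: "tcontS C (\<phi> y)" and ky: "k = nodeOf (\<phi> y)"
          using rch_step by simp_all
        have "y \<in> D" using rch_in[OF ry] CD by blast
        then have "x = y" using realz_D[OF R fw_go.prems(2) _ k] ty ky tcontS_isnd by blast
        then show ?thesis using ry by simp
      qed
    qed
  qed
qed


lemma cesaro_per:
  fixes x :: "nat \<Rightarrow> real"
  assumes per: "\<forall>t\<ge>a. x (t + p) = x t" and p: "0 < p"
  shows "(\<lambda>E. (\<Sum>t<E. x t) / real E) \<longlonglongrightarrow> (\<Sum>t\<in>{a..<a+p}. x t) / real p"
proof -
  define A where "A = (\<Sum>t\<in>{a..<a+p}. x t)"
  define h where "h E = (\<Sum>t<E. x t) - A * real E / real p" for E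
  have hp: "h (E + p) = h E" if "a \<le> E" for E
  proof -
    have "(\<Sum>t<E + p. x t) = (\<Sum>t<E. x t) + (\<Sum>t\<in>{E..<E+p}. x t)"
      by (simp add: sum.atLeastLessThan_concat[symmetric] lessThan_atLeast0)
    also have "(\<Sum>t\<in>{E..<E+p}. x t) = A" unfolding A_def by (rule win_shift[OF per that])
    finally show ?thesis unfolding h_def using p by (simp add: field_simps)
  qed
  define M where "M = Max ((\<lambda>E. \<bar>h E\<bar>) ` {a..<a+p})"
  have hb: "\<bar>h E\<bar> \<le> M" if "a \<le> E" for E
    using that
  proof (induction E rule: less_induct)
    case (less E)
    show ?case
    proof (cases "E < a + p")
      case True
      then show ?thesis unfolding M_def using less.prems by (intro Max_ge) auto
    next
      case False
      then have "a \<le> E - p" "E - p < E" using p by auto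
      then have "\<bar>h (E - p)\<bar> \<le> M" using less.IH by blast
      moreover have "h E = h (E - p)" using hp[of "E - p"] \<open>a \<le> E - p\<close> False by simp
      ultimately show ?thesis by simp
    qed
  qed
  have h0: "(\<lambda>E. h E / real E) \<longlonglongrightarrow> 0"
  proof (rule tendsto_0_le[where K = M])
    show "(\<lambda>E. 1 / real E) \<longlonglongrightarrow> 0" by (rule lim_const_over_n)
    have "\<forall>E\<ge>max a 1. norm (h E / real E) \<le> norm (1 / real E) * M"
    proof (intro allI impI)
      fix E :: nat assume "max a 1 \<le> E"
      then have E: "a \<le> E" "0 < E" by auto
      have "norm (h E / real E) = \<bar>h E\<bar> / real E" by simp
      also have "\<dots> \<le> M / real E" using hb[OF E(1)] E(2) by (simp add: divide_right_mono)
      finally show "norm (h E / real E) \<le> norm (1 / real E) * M" by simp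
    qed
    then show "eventually (\<lambda>E. norm (h E / real E) \<le> norm (1 / real E) * M) sequentially"
      unfolding eventually_sequentially by blast
  qed
  have "(\<lambda>E. A / real p + h E / real E) \<longlonglongrightarrow> A / real p + 0"
    by (intro tendsto_add tendsto_const h0)
  then have "(\<lambda>E. A / real p + h E / real E) \<longlonglongrightarrow> A / real p" by simp
  moreover have "eventually (\<lambda>E. A / real p + h E / real E = (\<Sum>t<E. x t) / real E) sequentially"
    unfolding eventually_sequentially
    by (intro exI[of _ 1] allI impI) (auto simp: h_def field_simps)
  ultimately show ?thesis unfolding A_def by (rule Lim_transform_eventually)
qed

lemma enum_below:
  fixes J :: "nat set"
  assumes inf: "infinite J"
  shows "{j\<in>J. j < enumerate J N} = enumerate J ` {..<N}"
proof
  show "{j\<in>J. j < enumerate J N} \<subseteq> enumerate J ` {..<N}"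
  proof
    fix j assume "j \<in> {j\<in>J. j < enumerate J N}"
    then have j: "j \<in> J" "j < enumerate J N" by auto
    obtain t where t: "enumerate J t = j" using enumerate_Ex[OF inf j(1)] by blast
    then have "enumerate J t < enumerate J N" using j(2) by simp
    then have "t < N" using enumerate_mono_iff[OF inf] by blast
    then show "j \<in> enumerate J ` {..<N}" using t by blast
  qed
next
  show "enumerate J ` {..<N} \<subseteq> {j\<in>J. j < enumerate J N}"
    using inf enumerate_in_set[OF inf] by auto
qed

lemma enum_sum:
  fixes J :: "nat set" and c :: "nat \<Rightarrow> real"
  assumes inf: "infinite J" and z: "\<forall>j. j \<notin> J \<longrightarrow> c j = 0"
  shows "(\<Sum>t<N. c (enumerate J t)) = (\<Sum>j<enumerate J N. c j)"
proof -
  have "(\<Sum>j<enumerate J N. c j) = (\<Sum>j\<in>{j\<in>J. j < enumerate J N}. c j)"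
    using z by (intro sum.mono_neutral_right) auto
  also have "\<dots> = (\<Sum>j\<in>enumerate J ` {..<N}. c j)" using enum_below[OF inf] by simp
  also have "\<dots> = (\<Sum>t<N. c (enumerate J t))"
    using inj_enumerate[OF inf] by (simp add: sum.reindex inj_on_def)
  finally show ?thesis by simp
qed

lemma enum_card:
  fixes J :: "nat set"
  assumes inf: "infinite J"
  shows "(\<Sum>j<enumerate J N. (if j \<in> J then 1 else 0 :: real)) = real N"
  using enum_sum[OF inf, of "\<lambda>j. if j \<in> J then 1 else 0" N] enumerate_in_set[OF inf] by simp

lemma cesaro_J:
  fixes c :: "nat \<Rightarrow> real"
  assumes perc: "\<forall>t\<ge>a. c (t + p) = c t" and perJ: "\<forall>t\<ge>a. (t + p \<in> J) = (t \<in> J)"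
    and p: "0 < p" and ex: "\<exists>j\<in>{a..<a+p}. j \<in> J" and z: "\<forall>j. j \<notin> J \<longrightarrow> c j = 0"
  shows "(\<lambda>N. (\<Sum>t<Suc N. c (enumerate J t)) / real (Suc N)) \<longlonglongrightarrow>
           (\<Sum>t\<in>{a..<a+p}. c t) / (\<Sum>t\<in>{a..<a+p}. (if t \<in> J then 1 else 0))"
proof -
  define d where "d t = (if t \<in> J then 1 else 0 :: real)" for t
  have perd: "\<forall>t\<ge>a. d (t + p) = d t" using perJ by (simp add: d_def)
  obtain j0 where j0: "j0 \<in> {a..<a+p}" "j0 \<in> J" using ex by blast
  have inJ: "j0 + k * p \<in> J" for k
  proof (induction k)
    case 0 then show ?case using j0 by simp
  next
    case (Suc k)
    have "a \<le> j0 + k * p" using j0 by simp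
    then have "(j0 + k * p + p \<in> J) = (j0 + k * p \<in> J)" using perJ by blast
    moreover have "j0 + Suc k * p = j0 + k * p + p" by simp
    ultimately show ?case using Suc by metis
  qed
  have inf: "infinite J"
  proof
    assume "finite J"
    then obtain B where "\<forall>j\<in>J. j \<le> B" using finite_nat_set_iff_bounded_le by blast
    then have "j0 + Suc B * p \<le> B" using inJ by blast
    moreover have "Suc B \<le> Suc B * p" using p by (metis One_nat_def Suc_leI mult.right_neutral mult_le_mono2)
    ultimately show False by simp
  qed
  define C where "C = (\<Sum>t\<in>{a..<a+p}. c t)"
  define Q where "Q = (\<Sum>t\<in>{a..<a+p}. d t)"
  have Qpos: "0 < Q" unfolding Q_def d_def using j0
    by (intro sum_pos2[of _ j0]) auto
  have F: "(\<lambda>E. (\<Sum>t<E. c t) / real E) \<longlonglongrightarrow> C / real p" unfolding C_def by (rule cesaro_per[OF perc p])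
  have G: "(\<lambda>E. (\<Sum>t<E. d t) / real E) \<longlonglongrightarrow> Q / real p" unfolding Q_def by (rule cesaro_per[OF perd p])
  have FG: "(\<lambda>E. ((\<Sum>t<E. c t) / real E) / ((\<Sum>t<E. d t) / real E)) \<longlonglongrightarrow> (C / real p) / (Q / real p)"
    using Qpos p by (intro tendsto_divide F G) auto
  have lim: "(C / real p) / (Q / real p) = C / Q" using p by simp
  have "filterlim (\<lambda>N. enumerate J (Suc N)) sequentially sequentially"
  proof -
    have "strict_mono (enumerate J)" using inf by (simp add: strict_mono_def)
    then have "filterlim (enumerate J) sequentially sequentially" by (rule filterlim_subseq)
    then show ?thesis using filterlim_Suc filterlim_compose by blast
  qed
  from filterlim_compose[OF FG[unfolded lim] this]
  have L: "(\<lambda>N. ((\<Sum>t<enumerate J (Suc N). c t) / real (enumerate J (Suc N))) /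
          ((\<Sum>t<enumerate J (Suc N). d t) / real (enumerate J (Suc N)))) \<longlonglongrightarrow> C / Q" .
  have "(\<Sum>t<enumerate J (Suc N). d t) = real (Suc N)" for N
    unfolding d_def by (rule enum_card[OF inf])
  moreover have "(\<Sum>t<enumerate J (Suc N). c t) = (\<Sum>t<Suc N. c (enumerate J t))" for N
    using enum_sum[OF inf z] by simp
  moreover have "0 < enumerate J (Suc N)" for N
    using le_enumerate[OF inf, of "Suc N"] by simp
  ultimately have "((\<Sum>t<enumerate J (Suc N). c t) / real (enumerate J (Suc N))) /
          ((\<Sum>t<enumerate J (Suc N). d t) / real (enumerate J (Suc N))) = (\<Sum>t<Suc N. c (enumerate J t)) / real (Suc N)" for N
    by simp
  then show ?thesis using L unfolding C_def Q_def d_def by simp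
qed


definition shift_out :: "nat \<Rightarrow> tval \<Rightarrow> tval" where
  "shift_out l x = mapn (\<lambda>p. p - l) x"

lemma arr_inT: "arr M N f \<Longrightarrow> z \<in> {1..M} \<Longrightarrow> in_T N (f z)"
  unfolding arr_def by blast

lemma arr_realz: "arr M N f \<Longrightarrow> realz f {1..M}"
  unfolding arr_def realz_def
proof (intro ballI allI impI notI)
  fix a k b
  assume A: "(\<forall>i\<in>{1..M}. in_T N (f i)) \<and>
    (\<forall>i\<in>{1..M}. \<forall>k. f i = Nd k \<longrightarrow> (\<forall>j\<in>{1..M} - {i}. f j \<noteq> Nd k \<and> (\<forall>r. f j \<noteq> Wt r k)))"
    and a: "a \<in> {1..M}" "f a = Nd k" and b: "b \<in> {1..M} - {a}" and nb: "isnd (f b) \<and> nodeOf (f b) = k"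
  have "f b \<noteq> Nd k \<and> (\<forall>r. f b \<noteq> Wt r k)" using A a b by blast
  then show False using nb by (cases "f b") auto
qed

lemma tseq_it: "(\<forall>t\<in>{1..<j}. tcont l (tseq f l i t)) \<Longrightarrow> tseq f l i j = it f (l + i) j"
proof (induction j)
  case 0
  then show ?case by simp
next
  case (Suc j)
  have "tseq f l i j = it f (l + i) j" using Suc by simp
  moreover have "j = 0 \<or> tcont l (tseq f l i j)"
  proof (cases "j = 0")
    case False
    then have "j \<in> {1..<Suc j}" by simp
    then show ?thesis using Suc.prems by blast
  qed simp
  ultimately show ?case by (auto simp: it_Suc)
qed

lemma wt_in_wgt: "in_T N x \<Longrightarrow> wt_in N x = wgt x"
  by (cases x) (auto simp: in_T_def wt_in_def)

locale trloc =
  fixes l m n :: nat and f :: "nat \<Rightarrow> tval" and i :: nat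
  assumes A: "arr (l + m) (l + n) f" and I: "i \<in> {1..m}"
begin

abbreviation "C \<equiv> {1..l}"
abbreviation "u \<equiv> it f (l + i)"

lemma u_node: "(\<forall>t\<in>{1..<Suc j}. tcontS C (u t)) \<Longrightarrow> isnd (u j) \<and> nodeOf (u j) \<in> {1..l+m}"
proof (cases j)
  case 0
  then show ?thesis using I by simp
next
  case (Suc j')
  assume "\<forall>t\<in>{1..<Suc j}. tcontS C (u t)"
  then have "tcontS C (u j)" using Suc by auto
  then show ?thesis by (cases "u j") auto
qed

lemma u_Suc: "isnd (u j) \<Longrightarrow> u (Suc j) = f (nodeOf (u j))"
  by (simp add: it_Suc tnext_isnd)

lemma u_inT: "(\<forall>t\<in>{1..<Suc j}. tcontS C (u t)) \<Longrightarrow> in_T (l + n) (u (Suc j))"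
  using u_node[of j] u_Suc[of j] arr_inT[OF A] by simp

lemma wt_cycle:
  assumes cont: "\<forall>t\<ge>1. tcontS C (u t)" and per: "\<forall>t\<ge>a. u (t + p) = u t" and p: "0 < p"
  shows "\<exists>j\<in>{a..<a+p}. isWt (u j)"
proof (rule ccontr)
  assume "\<not> (\<exists>j\<in>{a..<a+p}. isWt (u j))"
  then have nw: "\<forall>j\<in>{a..<a+p}. \<not> isWt (u j)" by blast
  define x where "x t = nodeOf (u t)" for t
  have isn: "isnd (u t)" for t
    using cont tcontS_isnd by (cases t) auto
  have ustep: "u (Suc t) = f (x t)" for t unfolding x_def using u_Suc[OF isn] .
  have xC: "x t \<in> C" if "1 \<le> t" for t using cont that unfolding x_def by (auto simp: tcontS_iff)
  have xD: "x t \<in> {1..l+m}" for t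
  proof (cases t)
    case 0 then show ?thesis using I by (simp add: x_def)
  next
    case (Suc t') then show ?thesis using xC[of t] by auto
  qed
  have allNd: "\<not> isWt (u t)" if "a \<le> t" for t
    using that
  proof (induction t rule: less_induct)
    case (less t)
    show ?case
    proof (cases "t < a + p")
      case True then show ?thesis using nw less.prems by auto
    next
      case False
      then have "a \<le> t - p" "t - p < t" using p by auto
      then have nw2: "\<not> isWt (u (t - p))" using less.IH by blast
      have "u (t - p + p) = u (t - p)" using per \<open>a \<le> t - p\<close> by blast
      moreover have "t - p + p = t" using False by simp
      ultimately have "u t = u (t - p)" by simp
      then show ?thesis using nw2 by simp
    qed
  qed
  have ex: "x (a + p) = x a" using per by (simp add: x_def)
  define b where "b = (LEAST b. x (b + p) = x b)"
  have bx: "x (b + p) = x b" unfolding b_def by (rule LeastI[of _ a]) (rule ex)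
  have ba: "b \<le> a" unfolding b_def by (rule Least_le) (rule ex)
  have b0: "b \<noteq> 0"
  proof
    assume "b = 0"
    then have "x p = x 0" using bx by simp
    moreover have "x p \<in> C" using xC p by simp
    moreover have "x 0 = l + i" by (simp add: x_def)
    ultimately show False using I by simp
  qed
  then obtain b' where b': "b = Suc b'" by (cases b) auto
  have nb: "x (b' + p) \<noteq> x b'"
    using not_less_Least[of b' "\<lambda>b. x (b + p) = x b"] b' unfolding b_def by simp
  have xper: "x (t + p) = x t" if "b \<le> t" for t
    using that
  proof (induction t rule: dec_induct)
    case base then show ?case by (rule bx)
  next
    case (step t)
    have s1: "u (Suc (t + p)) = f (x (t + p))" by (rule ustep)
    have s2: "u (Suc t) = f (x t)" by (rule ustep)
    have "x (Suc t + p) = nodeOf (u (Suc (t + p)))" by (simp add: x_def)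
    also have "\<dots> = nodeOf (f (x (t + p)))" by (simp only: s1)
    also have "\<dots> = nodeOf (f (x t))" using step.IH by simp
    also have "\<dots> = x (Suc t)" by (simp only: x_def s2)
    finally show ?case .
  qed
  have uper: "u (t + p) = u t" if "Suc b \<le> t" for t
  proof -
    define t' where "t' = t - 1"
    have t': "t = Suc t'" "b \<le> t'" using that by (auto simp: t'_def)
    have "u (t + p) = f (x (t' + p))" using t' ustep[of "t' + p"] by simp
    also have "\<dots> = f (x t')" using xper[OF t'(2)] by simp
    also have "\<dots> = u t" using t' ustep by simp
    finally show ?thesis .
  qed
  have umult: "u (b + p + k * p) = u (b + p)" for k
  proof (induction k)
    case 0 then show ?case by simp
  next
    case (Suc k)
    have "Suc b \<le> b + p + k * p" using p by simp
    then have "u (b + p + k * p + p) = u (b + p + k * p)" by (rule uper)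
    have e: "b + p + Suc k * p = b + p + k * p + p" by simp
    show ?case using Suc.IH \<open>u (b + p + k * p + p) = u (b + p + k * p)\<close> by (simp only: e)
  qed
  have "a \<le> b + p + a * p" using p by (simp add: trans_le_add2)
  then have "\<not> isWt (u (b + p + a * p))" by (rule allNd)
  then have "\<not> isWt (u (b + p))" using umult[of a] by simp
  then have "u (b + p) = Nd (x (b + p))" using isn[of "b + p"] unfolding x_def by (cases "u (b + p)") auto
  moreover have "u (b + p) = f (x (b' + p))" using b' ustep by simp
  ultimately have fa: "f (x (b' + p)) = Nd (x b)" using bx by simp
  have "f (x b') = u b" using b' ustep by simp
  then have fb: "isnd (f (x b'))" "nodeOf (f (x b')) = x b" using isn[of b] by (simp_all add: x_def)
  have "x (b' + p) = x b'"
    using realz_D[OF arr_realz[OF A] xD xD fa fb] .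
  then show False using nb by simp
qed

theorem trace_wres: "trace l n f i = shift_out l (wres f C (l + i))"
proof -
  let ?v = "tseq f l i"
  show ?thesis
  proof (cases "\<exists>K\<ge>1. \<not> tcont l (?v K)")
    case True
    define K where "K = (LEAST K. K \<ge> 1 \<and> \<not> tcont l (?v K))"
    have K1: "K \<ge> 1" "\<not> tcont l (?v K)" unfolding K_def using LeastI_ex[OF True] by blast+
    have Kc: "tcont l (?v t)" if "1 \<le> t" "t < K" for t
      using not_less_Least[of t "\<lambda>K. K \<ge> 1 \<and> \<not> tcont l (?v K)"] that unfolding K_def by blast
    have vu: "?v t = u t" if "t \<le> K" for t
      using that Kc by (intro tseq_it) auto
    have uc: "\<forall>t\<in>{1..<K}. tcontS C (u t)" using Kc vu by (auto simp: tcont_eq)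
    have uK: "\<not> tcontS C (u K)" using K1 vu by (simp add: tcont_eq)
    have fw: "fw f C (l + i) (agg u K)" using idx_fw[of K C f "l + i"] K1 uc uK by simp
    have W: "wres f C (l + i) = agg u K" using wres_fw[OF fw] .
    have inT: "in_T (l + n) (u t)" if "t \<in> {1..K}" for t
    proof -
      define t' where "t' = t - 1"
      have t': "t = Suc t'" using \<open>t \<in> {1..K}\<close> by (auto simp: t'_def)
      have "\<forall>s\<in>{1..<Suc t'}. tcontS C (u s)" using uc t' that by auto
      then show ?thesis using u_inT t' by simp
    qed
    have S: "(\<Sum>j\<in>{1..K}. wt_in (l + n) (?v j)) = (\<Sum>j\<in>{1..K}. wgt (u j))"
      using inT vu wt_in_wgt by (intro sum.cong) auto
    have B: "(\<exists>j\<in>{1..<K}. \<exists>r k. ?v j = Wt r k \<and> 1 \<le> k \<and> k \<le> l) = (\<exists>j\<in>{1..<K}. isWt (u j))"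
    proof -
      have "(\<exists>r k. ?v j = Wt r k \<and> 1 \<le> k \<and> k \<le> l) = isWt (u j)" if "j \<in> {1..<K}" for j
      proof -
        have "tcontS C (u j)" using uc that by blast
        then show ?thesis using that vu[of j] by (cases "u j") (auto simp: isWt_def)
      qed
      then show ?thesis by blast
    qed
    have B2: "(\<exists>j\<in>{1..K}. isWt (u j)) = ((\<exists>j\<in>{1..<K}. isWt (u j)) \<or> isWt (u K))"
      using K1 by (auto simp: le_less)
    have tr: "trace l n f i = (case ?v K of
          EStar \<Rightarrow> EStar
        | AStar \<Rightarrow> AStar
        | Nd p \<Rightarrow> (if (\<exists>j\<in>{1..<K}. \<exists>r k. ?v j = Wt r k \<and> 1 \<le> k \<and> k \<le> l)
                   then Wt (\<Sum>j\<in>{1..K}. wt_in (l + n) (?v j)) (p - l) else Nd (p - l))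
        | Wt r p \<Rightarrow> Wt (\<Sum>j\<in>{1..K}. wt_in (l + n) (?v j)) (p - l))"
      unfolding trace_def Let_def K_def using True by simp
    show ?thesis
      unfolding tr W S B shift_out_def agg_def B2 using vu[of K]
      by (cases "u K") auto
  next
    case False
    then have cont: "\<forall>t\<ge>1. tcontS C (u t)" and vu: "\<And>t. ?v t = u t"
      using tseq_it[where f=f and l=l and i=i] by (auto simp: tcont_eq)
    have nf: "\<not> (\<exists>e. fw f C (l + i) e)"
    proof
      assume "\<exists>e. fw f C (l + i) e"
      then obtain e where "fw f C (l + i) e" by blast
      from fw_idx[OF this] cont show False by auto
    qed
    obtain y w where yw: "rch f C (l + i) y" "cyc f C y w" using D1[of C f "l + i"] nf by auto
    have W: "wres f C (l + i) = (if 0 \<le> w then EStar else AStar)" using wres_div[OF nf] isgn_eq[OF yw] by simp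
    obtain a p where ap: "0 < p" "\<forall>t\<ge>a. u (t + p) = u t" "(\<Sum>t\<in>{a..<a+p}. wgt (u t)) = w"
      using cyc_window[OF yw] by blast
    define J where "J = {j. \<exists>r k. ?v j = Wt r k \<and> 1 \<le> k \<and> k \<le> l}"
    have J: "J = {j. isWt (u j)}"
    proof -
      have "(\<exists>r k. ?v j = Wt r k \<and> 1 \<le> k \<and> k \<le> l) = isWt (u j)" for j
      proof (cases j)
        case 0 then show ?thesis using vu[of 0] by simp
      next
        case (Suc j') then show ?thesis using cont[rule_format, of j] vu[of j] by (cases "u j") (auto simp: isWt_def)
      qed
      then show ?thesis unfolding J_def by blast
    qed
    have cw: "wt_in l (?v j) = wgt (u j)" for j
    proof (cases j)
      case 0 then show ?thesis using vu[of 0] by (simp add: wt_in_def)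
    next
      case (Suc j') then show ?thesis using cont[rule_format, of j] vu[of j] by (cases "u j") (auto simp: wt_in_def)
    qed
    have ex: "\<exists>j\<in>{a..<a+p}. j \<in> J" using wt_cycle[OF cont ap(2) ap(1)] J by simp
    have lim: "(\<lambda>N. (\<Sum>t<Suc N. wgt (u (enumerate J t))) / real (Suc N)) \<longlonglongrightarrow>
           (\<Sum>t\<in>{a..<a+p}. wgt (u t)) / (\<Sum>t\<in>{a..<a+p}. (if t \<in> J then 1 else 0))"
      using ap(2) ap(1) ex J by (intro cesaro_J) (auto simp: wgt_notWt)
    define Q where "Q = (\<Sum>t\<in>{a..<a+p}. (if t \<in> J then 1 else 0 :: real))"
    obtain j0 where j0: "j0 \<in> {a..<a+p}" "j0 \<in> J" using ex by blast
    have Qpos: "0 < Q" unfolding Q_def using j0 by (intro sum_pos2[of _ j0]) auto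
    have lim2: "(\<lambda>N. ereal ((\<Sum>t<Suc N. wt_in l (?v (enumerate J t))) / real (Suc N))) \<longlonglongrightarrow> ereal (w / Q)"
      using lim ap(3) unfolding Q_def cw by simp
    have LI: "liminf (\<lambda>N. ereal ((\<Sum>t<Suc N. wt_in l (?v (enumerate J t))) / real (Suc N))) = ereal (w / Q)"
      by (rule lim_imp_Liminf[OF trivial_limit_sequentially lim2])
    have sgn: "(0 \<le> ereal (w / Q)) = (0 \<le> w)" using Qpos by (simp add: zero_le_divide_iff)
    have tr: "trace l n f i = (if liminf (\<lambda>N. ereal ((\<Sum>t<Suc N. wt_in l (?v (enumerate J t))) / real (Suc N))) \<ge> 0 then EStar else AStar)"
      unfolding trace_def Let_def J_def by (simp only: if_not_P[OF False])
    show ?thesis unfolding tr LI W shift_out_def using sgn by simp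
  qed
qed

end


lemma in_T_iff: "in_T N x \<longleftrightarrow> (isnd x \<longrightarrow> nodeOf x \<in> {1..N})"
  by (cases x) (auto simp: in_T_def)

lemma shiftT_mapn: "shiftT n x = mapn (\<lambda>j. n + j) x"
  by (cases x) (auto simp: shiftT_def)

lemma nd_iff: "(x \<noteq> Nd k \<and> (\<forall>r. x \<noteq> Wt r k)) = (\<not> (isnd x \<and> nodeOf x = k))"
  by (cases x) auto

lemma arr_iff: "arr M N f \<longleftrightarrow> (\<forall>i\<in>{1..M}. in_T N (f i)) \<and> realz f {1..M}"
  unfolding arr_def realz_def nd_iff by (rule refl)

lemma realzI:
  assumes "\<And>a b k. a \<in> D \<Longrightarrow> b \<in> D \<Longrightarrow> f a = Nd k \<Longrightarrow> isnd (f b) \<Longrightarrow> nodeOf (f b) = k \<Longrightarrow> a = b"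
  shows "realz f D"
  unfolding realz_def using assms by blast

lemma post_Nd: "post g x = Nd k \<Longrightarrow> \<exists>j. x = Nd j \<and> g j = Nd k"
  unfolding post_def by (cases x; cases "g (nodeOf x)") (auto split: if_splits)

lemma post_isnd: "isnd (post g x) \<Longrightarrow> isnd x \<and> isnd (g (nodeOf x)) \<and> nodeOf (post g x) = nodeOf (g (nodeOf x))"
  unfolding post_def by (cases x; cases "g (nodeOf x)") (auto split: if_splits)

lemma post_isnd2: "isnd x \<Longrightarrow> post g x = pre x (g (nodeOf x))"
  unfolding post_def by simp

lemma in_T_post: "in_T l x \<Longrightarrow> (\<forall>j\<in>{1..l}. in_T n (g j)) \<Longrightarrow> in_T n (post g x)"
  unfolding post_def in_T_iff by auto

lemma pre_mapn: "pre (mapn \<rho> x) e = pre x e"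
  by (cases x) auto

lemma mapn_pre2: "pre x (mapn \<rho> e) = mapn \<rho> (pre x e)"
  by (cases x; cases e) auto

lemma mapn_comp: "mapn \<rho> (mapn \<sigma> x) = mapn (\<lambda>j. \<rho> (\<sigma> j)) x"
  by (cases x) auto

lemma mapn_id: "mapn (\<lambda>j. j) x = x"
  by (cases x) auto

lemma post_post: "post h (post g x) = post (\<lambda>j. post h (g j)) x"
  by (cases x; cases "g (nodeOf x)"; cases "h (nodeOf (g (nodeOf x)))") (auto simp: post_def add.assoc)

lemma ax_id: "arr m m idA"
  unfolding arr_def idA_def in_T_def by auto

lemma ax_comp: "arr m l f \<Longrightarrow> arr l n g \<Longrightarrow> arr m n (comp f g)"
proof -
  assume f: "arr m l f" and g: "arr l n g"
  have T: "\<forall>i\<in>{1..m}. in_T n (comp f g i)"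
  proof
    fix i assume "i \<in> {1..m}"
    have "\<forall>j\<in>{1..l}. in_T n (g j)" using arr_inT[OF g] by blast
    then show "in_T n (comp f g i)" unfolding comp_post
      using in_T_post arr_inT[OF f \<open>i \<in> {1..m}\<close>] by blast
  qed
  have R: "realz (comp f g) {1..m}"
  proof (rule realzI)
    fix a b k assume a: "a \<in> {1..m}" and b: "b \<in> {1..m}" and fa: "comp f g a = Nd k"
      and ib: "isnd (comp f g b)" and nb: "nodeOf (comp f g b) = k"
    obtain j where j: "f a = Nd j" "g j = Nd k" using post_Nd[of g "f a" k] fa by (auto simp: comp_post)
    have pb: "isnd (f b)" "isnd (g (nodeOf (f b)))" "nodeOf (g (nodeOf (f b))) = k"
      using post_isnd[of g "f b"] ib nb by (auto simp: comp_post)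
    have jl: "j \<in> {1..l}" using arr_inT[OF f a] j by (simp add: in_T_def)
    have jb: "nodeOf (f b) \<in> {1..l}" using arr_inT[OF f b] pb(1) by (simp add: in_T_iff)
    have "j = nodeOf (f b)" using realz_D[OF arr_realz[OF g] jl jb j(2) pb(2,3)] .
    then show "a = b" using realz_D[OF arr_realz[OF f] a b j(1) pb(1)] by simp
  qed
  show ?thesis using T R arr_iff by blast
qed

lemma ax_unit: "arr_eq m (comp idA f) f \<and> arr_eq m (comp f idA) f"
  unfolding arr_eq_def
proof (intro conjI ballI)
  fix i show "comp idA f i = f i" by (simp add: comp_post idA_def post_def)
next
  fix i show "comp f idA i = f i"
    by (simp add: comp_post idA_def post_def) (cases "f i"; simp)
qed

lemma ax_assoc: "arr_eq m (comp (comp f g) h) (comp f (comp g h))"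
proof -
  have "comp g h = (\<lambda>j. post h (g j))" by (rule ext) (simp add: comp_post)
  then show ?thesis unfolding arr_eq_def by (simp add: comp_post post_post)
qed


lemma osum_eq: "osum m n f g i = (if i \<le> m then f i else mapn (\<lambda>j. n + j) (g (i - m)))"
  by (simp add: osum_def shiftT_mapn)

lemma mapn_Nd: "mapn \<rho> x = Nd q \<Longrightarrow> \<exists>j. x = Nd j \<and> q = \<rho> j"
  by (cases x) auto

lemma post_cong: "(isnd x \<Longrightarrow> G (nodeOf x) = G' (nodeOf x)) \<Longrightarrow> post G x = post G' x"
  unfolding post_def by auto

lemma mapn_0: "mapn ((+) 0) x = x"
  by (cases x) auto

lemma pre_Nd_node: "isnd x \<Longrightarrow> pre x (Nd (\<rho> (nodeOf x))) = mapn \<rho> x"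
  by (cases x) auto

lemma in_T_mapn_shift: "in_T l x \<Longrightarrow> in_T (n + l) (mapn (\<lambda>j. n + j) x)"
  by (cases x) (auto simp: in_T_def)

lemma in_T_mono: "in_T n x \<Longrightarrow> n \<le> N \<Longrightarrow> in_T N x"
  by (cases x) (auto simp: in_T_def)

lemma ax_osum:
  assumes f: "arr m n f" and g: "arr k l g"
  shows "arr (m + k) (n + l) (osum m n f g)"
proof -
  have T: "\<forall>i\<in>{1..m+k}. in_T (n + l) (osum m n f g i)"
  proof
    fix i assume i: "i \<in> {1..m+k}"
    show "in_T (n + l) (osum m n f g i)"
    proof (cases "i \<le> m")
      case True
      then show ?thesis using arr_inT[OF f] i in_T_mono[of n _ "n + l"] by (simp add: osum_eq)
    next
      case False
      then have "i - m \<in> {1..k}" using i by auto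
      then show ?thesis using arr_inT[OF g] False in_T_mapn_shift by (simp add: osum_eq)
    qed
  qed
  have R: "realz (osum m n f g) {1..m+k}"
  proof (rule realzI)
    fix a b q assume a: "a \<in> {1..m+k}" and b: "b \<in> {1..m+k}" and fa: "osum m n f g a = Nd q"
      and ib: "isnd (osum m n f g b)" and nb: "nodeOf (osum m n f g b) = q"
    show "a = b"
    proof (cases "a \<le> m")
      case True
      then have fa': "f a = Nd q" using fa by (simp add: osum_eq)
      have qn: "q \<in> {1..n}" using arr_inT[OF f, of a] a True fa' by (simp add: in_T_def)
      show ?thesis
      proof (cases "b \<le> m")
        case True
        then show ?thesis using realz_D[OF arr_realz[OF f], of a b q] fa' ib nb a b \<open>a \<le> m\<close> by (simp add: osum_eq)
      next
        case False
        then have "b - m \<in> {1..k}" using b by auto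
        then have "isnd (g (b - m)) \<Longrightarrow> nodeOf (g (b - m)) \<ge> 1" using arr_inT[OF g] by (auto simp: in_T_iff)
        then show ?thesis using ib nb False qn by (auto simp: osum_eq mapn_node)
      qed
    next
      case False
      obtain j where j: "g (a - m) = Nd j" "q = n + j" using mapn_Nd fa False by (fastforce simp: osum_eq)
      have am: "a - m \<in> {1..k}" using a False by auto
      have "in_T l (g (a - m))" using arr_inT[OF g am] .
      then have j1: "j \<ge> 1" using j(1) by (simp add: in_T_def)
      show ?thesis
      proof (cases "b \<le> m")
        case True
        then have "nodeOf (f b) \<le> n" "isnd (f b)" using arr_inT[OF f, of b] b ib by (auto simp: in_T_iff osum_eq)
        then show ?thesis using nb True j j1 by (simp add: osum_eq)
      next
        case bF: False
        have bm: "b - m \<in> {1..k}" using b bF by auto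
        have "isnd (g (b - m))" "nodeOf (g (b - m)) = j" using ib nb bF j by (auto simp: osum_eq mapn_node)
        then have "a - m = b - m" using realz_D[OF arr_realz[OF g] am bm j(1)] by simp
        then show ?thesis using False bF by simp
      qed
    qed
  qed
  show ?thesis using T R arr_iff by blast
qed

lemma ax_osum_id: "arr_eq (m + n) (osum m m idA idA) idA"
  unfolding arr_eq_def by (simp add: osum_eq idA_def)

lemma ax_interchange:
  assumes f: "arr m1 m2 f" and g: "arr m2 m3 g" and f': "arr k1 k2 f'" and g': "arr k2 k3 g'"
  shows "arr_eq (m1 + k1) (osum m1 m3 (comp f g) (comp f' g')) (comp (osum m1 m2 f f') (osum m2 m3 g g'))"
  unfolding arr_eq_def
proof
  fix i assume i: "i \<in> {1..m1+k1}"
  show "osum m1 m3 (comp f g) (comp f' g') i = comp (osum m1 m2 f f') (osum m2 m3 g g') i"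
  proof (cases "i \<le> m1")
    case True
    have "post g (f i) = post (osum m2 m3 g g') (f i)"
    proof (rule post_cong)
      assume "isnd (f i)"
      then have "nodeOf (f i) \<le> m2" using arr_inT[OF f, of i] i True by (auto simp: in_T_iff)
      then show "g (nodeOf (f i)) = osum m2 m3 g g' (nodeOf (f i))" by (simp add: osum_eq)
    qed
    then show ?thesis using True by (simp add: osum_eq comp_post)
  next
    case False
    let ?y = "f' (i - m1)"
    have im: "i - m1 \<in> {1..k1}" using i False by auto
    show ?thesis
    proof (cases "isnd ?y")
      case True
      have jn: "nodeOf ?y \<in> {1..k2}" using arr_inT[OF f' im] True by (auto simp: in_T_iff)
      have "post (osum m2 m3 g g') (mapn (\<lambda>j. m2 + j) ?y) = pre ?y (mapn (\<lambda>j. m3 + j) (g' (nodeOf ?y)))"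
        using True jn by (simp add: post_isnd2 mapn_node pre_mapn osum_eq)
      also have "\<dots> = mapn (\<lambda>j. m3 + j) (post g' ?y)" using True by (simp add: post_isnd2 mapn_pre2)
      finally show ?thesis using False by (simp add: osum_eq comp_post)
    next
      case nd: False
      then show ?thesis using False by (cases ?y) (simp_all add: osum_eq comp_post post_def)
    qed
  qed
qed

lemma ax_osum_assoc: "arr_eq (m + k + p) (osum (m + k) (n + l) (osum m n f g) h) (osum m n f (osum k l g h))"
  unfolding arr_eq_def
proof
  fix i assume i: "i \<in> {1..m+k+p}"
  show "osum (m + k) (n + l) (osum m n f g) h i = osum m n f (osum k l g h) i"
  proof (cases "i \<le> m")
    case True then show ?thesis by (simp add: osum_eq)
  next
    case False
    then show ?thesis
    proof (cases "i \<le> m + k")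
      case True
      then have "i - m \<le> k" by simp
      then show ?thesis using True False by (simp add: osum_eq)
    next
      case F2: False
      have "i - m - k = i - (m + k)" "\<not> i - m \<le> k" using F2 by auto
      then show ?thesis using False F2 by (cases "h (i - (m + k))") (simp_all add: osum_eq)
    qed
  qed
qed

lemma ax_osum_unit: "arr_eq m (osum m n f idA) f \<and> arr_eq m (osum 0 0 idA f) f"
  unfolding arr_eq_def by (simp add: osum_eq mapn_0)

lemma ax_sym: "arr (m + n) (n + m) (sym m n)"
proof -
  have T: "\<forall>i\<in>{1..m+n}. in_T (n + m) (sym m n i)" by (auto simp: sym_def in_T_def)
  have R: "realz (sym m n) {1..m+n}"
    by (rule realzI) (auto simp: sym_def split: if_splits)
  show ?thesis using T R arr_iff by blast
qed

lemma ax_sym_nat: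
  assumes f: "arr m n f" and g: "arr k l g"
  shows "arr_eq (m + k) (comp (osum m n f g) (sym n l)) (comp (sym m k) (osum k l g f))"
  unfolding arr_eq_def
proof
  fix i assume i: "i \<in> {1..m+k}"
  show "comp (osum m n f g) (sym n l) i = comp (sym m k) (osum k l g f) i"
  proof (cases "i \<le> m")
    case True
    have r: "comp (sym m k) (osum k l g f) i = mapn (\<lambda>j. l + j) (f i)"
      using True i by (simp add: comp_post post_def sym_def osum_eq)
    show ?thesis
    proof (cases "isnd (f i)")
      case nd: True
      have "nodeOf (f i) \<in> {1..n}" using arr_inT[OF f, of i] i True nd by (auto simp: in_T_iff)
      then have "post (sym n l) (f i) = mapn (\<lambda>j. l + j) (f i)"
        using nd by (simp add: post_isnd2 sym_def pre_Nd_node[of "f i" "\<lambda>j. l + j", symmetric])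
      then show ?thesis using r True by (simp add: comp_post osum_eq)
    next
      case False
      then show ?thesis using r True by (cases "f i") (auto simp: comp_post osum_eq post_def)
    qed
  next
    case False
    have im: "i - m \<in> {1..k}" using i False by auto
    let ?y = "g (i - m)"
    have r: "comp (sym m k) (osum k l g f) i = ?y"
      using False im by (simp add: comp_post post_def sym_def osum_eq)
    show ?thesis
    proof (cases "isnd ?y")
      case nd: True
      have "nodeOf ?y \<in> {1..l}" using arr_inT[OF g, OF im] nd by (auto simp: in_T_iff)
      then have "post (sym n l) (mapn (\<lambda>j. n + j) ?y) = ?y"
        using nd by (simp add: post_isnd2 sym_def mapn_node pre_mapn pre_Nd_node[of ?y "\<lambda>j. j", simplified mapn_id])
      then show ?thesis using r False by (simp add: comp_post osum_eq)
    next
      case nd: False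
      then show ?thesis using r False by (cases ?y) (auto simp: comp_post osum_eq post_def)
    qed
  qed
qed

lemma ax_sym_inv: "arr_eq (m + n) (comp (sym m n) (sym n m)) idA"
  unfolding arr_eq_def by (auto simp: comp_post post_def sym_def idA_def)

lemma ax_hex: "arr_eq (m + n + k) (sym m (n + k)) (comp (osum (m + n) (n + m) (sym m n) idA) (osum n n idA (sym m k)))"
  unfolding arr_eq_def
proof
  fix i assume i: "i \<in> {1..m+n+k}"
  show "sym m (n + k) i = comp (osum (m + n) (n + m) (sym m n) idA) (osum n n idA (sym m k)) i"
  proof (cases "i \<le> m")
    case True then show ?thesis using i by (simp add: comp_post post_def sym_def osum_eq idA_def)
  next
    case False
    then show ?thesis
    proof (cases "i \<le> m + n")
      case True then show ?thesis using False by (simp add: comp_post post_def sym_def osum_eq idA_def)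
    next
      case F2: False
      then have "m < i - n" "n < i" by auto
      then show ?thesis using False F2 by (simp add: comp_post post_def sym_def osum_eq idA_def)
    qed
  qed
qed


lemma trace_wres':
  "arr (l + m) (l + n) f \<Longrightarrow> i \<in> {1..m} \<Longrightarrow> trace l n f i = shift_out l (wres f {1..l} (l + i))"
  using trloc.trace_wres[of l m n f i] unfolding trloc_def by blast

lemma wres_stop: "\<not> tcontS C (\<phi> s) \<Longrightarrow> wres \<phi> C s = \<phi> s"
  using wres_step[of \<phi> C s] by simp

lemma wres_go: "tcontS C (\<phi> s) \<Longrightarrow> wres \<phi> C s = pre (\<phi> s) (wres \<phi> C (nodeOf (\<phi> s)))"
  using wres_step[of \<phi> C s] by simp

lemma wres_cong_pre:
  assumes "\<forall>x\<in>C. \<phi> x = \<phi>' x" "finite C" "\<phi> s = pre a (\<phi>' s')" "isnd a"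
  shows "wres \<phi> C s = pre a (wres \<phi>' C s')"
proof -
  have i: "inj (\<lambda>j::nat. j)" by (simp add: inj_on_def)
  have "wres \<phi> ((\<lambda>j. j) ` C) s = pre a (mapn (\<lambda>j. j) (wres \<phi>' C s'))"
    using assms by (intro sim_wres[OF i]) (simp_all add: mapn_id)
  then show ?thesis by (simp add: mapn_id)
qed

lemma wres_cong: "\<forall>x\<in>C. \<phi> x = \<phi>' x \<Longrightarrow> finite C \<Longrightarrow> \<phi> s = \<phi>' s \<Longrightarrow> wres \<phi> C s = wres \<phi>' C s"
  using wres_cong_pre[of C \<phi> \<phi>' s "Nd 0" s] by simp

lemma shift_out_simps[simp]: "shift_out l (Nd p) = Nd (p - l)" "shift_out l (Wt r p) = Wt r (p - l)"
  "shift_out l EStar = EStar" "shift_out l AStar = AStar"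
  by (simp_all add: shift_out_def)

lemma tr_facts:
  assumes A: "arr (l + m) (l + n) f" and i: "i \<in> {1..m}"
  shows "in_T (l + n) (wres f {1..l} (l + i))"
    "isnd (wres f {1..l} (l + i)) \<Longrightarrow> nodeOf (wres f {1..l} (l + i)) \<in> {l+1..l+n}"
proof -
  have "\<forall>z\<in>{1..l} \<union> {l + i}. in_T (l + n) (f z)" using arr_inT[OF A] i by auto
  then show T: "in_T (l + n) (wres f {1..l} (l + i))" by (rule wres_range)
  assume "isnd (wres f {1..l} (l + i))"
  then show "nodeOf (wres f {1..l} (l + i)) \<in> {l+1..l+n}"
    using T wres_exit[of f "{1..l}" "l + i"] by (auto simp: in_T_iff)
qed

lemma ax_trace_arr:
  assumes A: "arr (l + m) (l + n) f"
  shows "arr m n (trace l n f)"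
proof -
  let ?W = "\<lambda>i. wres f {1..l} (l + i)"
  have tw: "\<And>i. i \<in> {1..m} \<Longrightarrow> trace l n f i = shift_out l (?W i)" using trace_wres'[OF A] by blast
  have T: "\<forall>i\<in>{1..m}. in_T n (trace l n f i)"
  proof
    fix i assume i: "i \<in> {1..m}"
    show "in_T n (trace l n f i)"
    proof (cases "isnd (?W i)")
      case True
      then have "nodeOf (?W i) \<in> {l+1..l+n}" using tr_facts(2)[OF A i] by simp
      then show ?thesis using tw[OF i] True by (cases "?W i") (auto simp: in_T_def)
    next
      case False
      then show ?thesis using tw[OF i] by (cases "?W i") (auto simp: in_T_def)
    qed
  qed
  have R: "realz (trace l n f) {1..m}"
  proof (rule realzI)
    fix a b k assume a: "a \<in> {1..m}" and b: "b \<in> {1..m}" and fa: "trace l n f a = Nd k"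
      and ib: "isnd (trace l n f b)" and nb: "nodeOf (trace l n f b) = k"
    obtain p where p: "?W a = Nd p" "k = p - l" using fa tw[OF a] mapn_Nd unfolding shift_out_def by metis
    have pl: "p \<in> {l+1..l+n}" using tr_facts(2)[OF A a] p by simp
    have ib': "isnd (?W b)" using ib tw[OF b] by (simp add: shift_out_def)
    have ql: "nodeOf (?W b) \<in> {l+1..l+n}" using tr_facts(2)[OF A b] ib' by simp
    have "nodeOf (trace l n f b) = nodeOf (?W b) - l" using tw[OF b] ib' by (simp add: shift_out_def mapn_node)
    then have nq: "nodeOf (?W b) = p" using nb p pl ql by auto
    have fa': "fw f {1..l} (l + a) (Nd p)" using wres_isnd[of f "{1..l}" "l + a"] p by simp
    have fb': "fw f {1..l} (l + b) (?W b)" using wres_isnd[OF ib'] .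
    have D: "l + a \<in> {1..l+m}" "l + b \<in> {1..l+m}" using a b by auto
    have sub: "{1..l} \<subseteq> {1..l+m}" by auto
    have H: "\<forall>x'\<in>{1..l+m}. \<forall>e'. fw f {1..l} x' e' \<longrightarrow> isnd e' \<longrightarrow> nodeOf e' = p \<longrightarrow>
        (x' = l + a \<or> rch f {1..l} x' (l + a) \<or> rch f {1..l} (l + a) x')"
      using RB[OF arr_realz[OF A] sub fa' refl D(1)] .
    have "l + b = l + a \<or> rch f {1..l} (l + b) (l + a) \<or> rch f {1..l} (l + a) (l + b)"
      using H D(2) fb' ib' nq by blast
    moreover have "\<not> rch f {1..l} (l + b) (l + a)" using rch_in a by fastforce
    moreover have "\<not> rch f {1..l} (l + a) (l + b)" using rch_in b by fastforce
    ultimately show "a = b" by simp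
  qed
  show ?thesis using T R arr_iff by blast
qed

lemma ax_yank: "arr_eq l (trace l l (sym l l)) idA"
  unfolding arr_eq_def
proof
  fix i assume i: "i \<in> {1..l}"
  have A: "arr (l + l) (l + l) (sym l l)" using ax_sym[of l l] .
  have s1: "sym l l (l + i) = Nd i" using i by (simp add: sym_def)
  have s2: "sym l l i = Nd (l + i)" using i by (simp add: sym_def)
  have "wres (sym l l) {1..l} (l + i) = wres (sym l l) {1..l} i"
    using wres_go[of "{1..l}" "sym l l" "l + i"] s1 i by simp
  also have "\<dots> = Nd (l + i)" using wres_stop[of "{1..l}" "sym l l" i] s2 i by simp
  finally show "trace l l (sym l l) i = idA i" using trace_wres'[OF A i] by (simp add: idA_def)
qed

lemma ax_van1:
  assumes A: "arr m n f"
  shows "arr_eq m (trace 0 n f) f"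
  unfolding arr_eq_def
proof
  fix i assume i: "i \<in> {1..m}"
  have A': "arr (0 + m) (0 + n) f" using A by simp
  have "wres f {1..0} (0 + i) = f i" using wres_stop[of "{1..0}" f i] by (simp add: tcontS_iff)
  then show "trace 0 n f i = f i" using trace_wres'[OF A' i] by (cases "f i") auto
qed

lemma ax_super:
  assumes A: "arr (l + m) (l + n) f" and g: "arr k p g"
  shows "arr_eq (m + k) (trace l (n + p) (osum (l + m) (l + n) f g)) (osum m n (trace l n f) g)"
  unfolding arr_eq_def
proof
  fix i assume i: "i \<in> {1..m+k}"
  let ?F = "osum (l + m) (l + n) f g"
  have AF: "arr (l + (m + k)) (l + (n + p)) ?F" using ax_osum[OF A g] by (simp add: add.assoc)
  have tw: "trace l (n + p) ?F i = shift_out l (wres ?F {1..l} (l + i))" using trace_wres'[OF AF i] .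
  show "trace l (n + p) ?F i = osum m n (trace l n f) g i"
  proof (cases "i \<le> m")
    case True
    have im: "i \<in> {1..m}" using i True by simp
    have "wres ?F {1..l} (l + i) = wres f {1..l} (l + i)"
      using True by (intro wres_cong) (auto simp: osum_eq)
    then show ?thesis using tw trace_wres'[OF A im] True by (simp add: osum_eq)
  next
    case False
    have "?F (l + i) = mapn (\<lambda>j. l + n + j) (g (i - m))" using False by (simp add: osum_eq)
    moreover have "\<not> tcontS {1..l} (mapn (\<lambda>j. l + n + j) (g (i - m)))"
    proof -
      have "i - m \<in> {1..k}" using i False by auto
      then have "in_T p (g (i - m))" using arr_inT[OF g] by blast
      then show ?thesis by (cases "g (i - m)") (auto simp: in_T_def)
    qed
    ultimately have "wres ?F {1..l} (l + i) = mapn (\<lambda>j. l + n + j) (g (i - m))"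
      using wres_stop[of "{1..l}" ?F "l + i"] by simp
    then show ?thesis using tw False by (cases "g (i - m)") (auto simp: osum_eq)
  qed
qed


lemma tight_alg:
  assumes "isnd E" "nodeOf E = q" "l < q" "isnd a"
  shows "shift_out l (pre a (pre E (mapn ((+) l) (h (q - l))))) = post h (pre a (shift_out l E))"
  using assms by (cases a; cases E; cases "h (q - l)") (auto simp: post_def shift_out_def)

lemma ax_tight:
  assumes g: "arr m m' g" and A: "arr (l + m') (l + n') f" and h: "arr n' n h"
  shows "arr_eq m (trace l n (comp (comp (osum l l idA g) f) (osum l l idA h))) (comp (comp g (trace l n' f)) h)"
  unfolding arr_eq_def
proof
  fix i assume i: "i \<in> {1..m}"
  let ?G = "osum l l idA g" and ?H = "osum l l idA h"
  let ?\<Phi> = "comp (comp ?G f) ?H"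
  let ?C = "{1..l}"
  have aG: "arr (l + m) (l + m') ?G" using ax_osum[OF ax_id g] .
  have aH: "arr (l + n') (l + n) ?H" using ax_osum[OF ax_id h] .
  have aP: "arr (l + m) (l + n) ?\<Phi>" using ax_comp[OF ax_comp[OF aG A] aH] .
  have LHS: "trace l n ?\<Phi> i = shift_out l (wres ?\<Phi> ?C (l + i))" using trace_wres'[OF aP i] .
  have Pe: "?\<Phi> x = post ?H (post f (?G x))" for x by (simp add: comp_post)
  have PC: "\<forall>x\<in>?C. ?\<Phi> x = post ?H (f x)" using Pe by (simp add: osum_eq idA_def post_def)
  have PL: "postloc f ?H ?C {1..l+m'}"
  proof
    show "\<forall>y\<in>?C. ?H y = Nd y" by (simp add: osum_eq idA_def)
    show "?C \<subseteq> {1..l+m'}" by auto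
    show "\<forall>x\<in>{1..l+m'}. isnd (f x) \<longrightarrow> nodeOf (f x) \<notin> ?C \<longrightarrow> \<not> tcontS ?C (?H (nodeOf (f x)))"
    proof (intro ballI impI)
      fix x assume x: "x \<in> {1..l+m'}" and nd: "isnd (f x)" and nC: "nodeOf (f x) \<notin> ?C"
      let ?p = "nodeOf (f x)"
      have "?p \<in> {1..l+n'}" using arr_inT[OF A x] nd by (simp add: in_T_iff)
      then have p: "l < ?p" "?p - l \<in> {1..n'}" using nC by auto
      have "in_T n (h (?p - l))" using arr_inT[OF h p(2)] .
      then show "\<not> tcontS ?C (?H ?p)" using p(1) by (cases "h (?p - l)") (auto simp: osum_eq in_T_def)
    qed
  qed
  have Psi: "postloc.\<Psi> f ?H = (\<lambda>y. post ?H (f y))" using postloc.\<Psi>_def[OF PL] by simp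
  show "trace l n ?\<Phi> i = comp (comp g (trace l n' f)) h i"
  proof (cases "isnd (g i)")
    case False
    then have "?\<Phi> (l + i) = g i" using i Pe by (cases "g i") (auto simp: osum_eq post_def)
    moreover have "\<not> tcontS ?C (g i)" using False tcontS_isnd by blast
    ultimately have "wres ?\<Phi> ?C (l + i) = g i" using wres_stop[of ?C ?\<Phi> "l + i"] by simp
    then show ?thesis using LHS False by (cases "g i") (auto simp: comp_post post_def)
  next
    case True
    let ?a = "g i" let ?j = "nodeOf (g i)"
    have j: "?j \<in> {1..m'}" using arr_inT[OF g i] True by (simp add: in_T_iff)
    have "?\<Phi> (l + i) = post ?H (post f (mapn ((+) l) ?a))" using Pe i by (simp add: osum_eq)
    also have "\<dots> = post ?H (pre ?a (f (l + ?j)))" using True by (simp add: post_isnd2 mapn_node pre_mapn)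
    also have "\<dots> = pre ?a (post ?H (f (l + ?j)))" using True by (simp add: post_pre)
    finally have P1: "?\<Phi> (l + i) = pre ?a (postloc.\<Psi> f ?H (l + ?j))" using Psi by simp
    have "wres ?\<Phi> ?C (l + i) = pre ?a (wres (postloc.\<Psi> f ?H) ?C (l + ?j))"
      using PC Psi P1 True by (intro wres_cong_pre) auto
    also have "wres (postloc.\<Psi> f ?H) ?C (l + ?j) = post ?H (wres f ?C (l + ?j))"
      using postloc.post_wres[OF PL] j by simp
    finally have W: "wres ?\<Phi> ?C (l + i) = pre ?a (post ?H (wres f ?C (l + ?j)))" .
    let ?E = "wres f ?C (l + ?j)"
    have TE: "trace l n' f ?j = shift_out l ?E" using trace_wres'[OF A j] .
    have R: "comp (comp g (trace l n' f)) h i = post h (pre ?a (shift_out l ?E))"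
      using True TE by (simp add: comp_post post_isnd2)
    show ?thesis
    proof (cases "isnd ?E")
      case False
      then show ?thesis using LHS W R by (cases ?E) (auto simp: post_def)
    next
      case nE: True
      let ?q = "nodeOf ?E"
      have q: "?q \<in> {l+1..l+n'}" using tr_facts(2)[OF A j] nE by simp
      have "?H ?q = mapn ((+) l) (h (?q - l))" using q by (simp add: osum_eq)
      then have "post ?H ?E = pre ?E (mapn ((+) l) (h (?q - l)))" using nE by (simp add: post_isnd2)
      then show ?thesis using LHS W R tight_alg[OF nE refl _ True, of l h] q by simp
    qed
  qed
qed

lemma ax_van2:
  assumes A: "arr (l + l' + m) (l + l' + n) f"
  shows "arr_eq m (trace (l + l') n f) (trace l' n (trace l (l' + n) f))"
  unfolding arr_eq_def
proof
  fix i assume i: "i \<in> {1..m}"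
  have A1: "arr (l + (l' + m)) (l + (l' + n)) f" using A by (simp add: add.assoc)
  let ?T1 = "trace l (l' + n) f"
  have aT: "arr (l' + m) (l' + n) ?T1" using ax_trace_arr[OF A1] .
  have LHS: "trace (l + l') n f i = shift_out (l + l') (wres f {1..l+l'} (l + l' + i))"
    using trace_wres'[OF A i] .
  have RHS: "trace l' n ?T1 i = shift_out l' (wres ?T1 {1..l'} (l' + i))" using trace_wres'[OF aT i] .
  have im: "(\<lambda>x. l + x) ` {1..l'} = {1..l+l'} - {1..l}"
  proof
    show "(\<lambda>x. l + x) ` {1..l'} \<subseteq> {1..l+l'} - {1..l}" by auto
    show "{1..l+l'} - {1..l} \<subseteq> (\<lambda>x. l + x) ` {1..l'}"
    proof
      fix x assume "x \<in> {1..l+l'} - {1..l}"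
      then have "x = l + (x - l)" "x - l \<in> {1..l'}" by auto
      then show "x \<in> (\<lambda>x. l + x) ` {1..l'}" by blast
    qed
  qed
  have key: "wres f {1..l} (l + x) = mapn (\<lambda>x. l + x) (?T1 x)" if x: "x \<in> {1..l'+m}" for x
  proof -
    let ?E = "wres f {1..l} (l + x)"
    have "?T1 x = shift_out l ?E" using trace_wres'[OF A1 x] .
    moreover have "isnd ?E \<Longrightarrow> nodeOf ?E \<in> {l+1..l+(l'+n)}" using tr_facts(2)[OF A1 x] by simp
    ultimately show ?thesis by (cases ?E) (auto simp: shift_out_def)
  qed
  have inj: "inj (\<lambda>x::nat. l + x)" by (simp add: inj_on_def)
  have "wres (wres f {1..l}) ((\<lambda>x. l + x) ` {1..l'}) (l + (l' + i)) = pre (Nd 0) (mapn (\<lambda>x. l + x) (wres ?T1 {1..l'} (l' + i)))"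
    using key i by (intro sim_wres[OF inj]) auto
  then have "wres f {1..l+l'} (l + l' + i) = mapn (\<lambda>x. l + x) (wres ?T1 {1..l'} (l' + i))"
    using compression[of "{1..l+l'}" "{1..l}" f "l + (l' + i)"] im by (simp add: add.assoc)
  then show "trace (l + l') n f i = trace l' n ?T1 i" using LHS RHS
    by (cases "wres ?T1 {1..l'} (l' + i)") (auto simp: shift_out_def)
qed


lemma ax_slide:
  assumes A: "arr (l + m) (l' + n) f" and g: "arr l' l g"
  shows "arr_eq m (trace l n (comp f (osum l' l g idA))) (trace l' n (comp (osum l' l g idA) f))"
  unfolding arr_eq_def
proof
  fix i assume i: "i \<in> {1..m}"
  let ?G = "osum l' l g idA"
  define \<sigma> where "\<sigma> y = (if y \<le> l' then 2 * y + 1 else 2 * (l + y - l'))" for y :: nat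
  define \<phi> where "\<phi> z = (if even z then mapn \<sigma> (f (z div 2)) else mapn (\<lambda>j. 2 * j) (?G (z div 2)))" for z :: nat
  define CA where "CA = (\<lambda>x. 2 * x) ` {1..l}"
  define CB where "CB = \<sigma> ` {1..l'}"
  define CE where "CE = CA \<union> CB"
  have CBo: "CB = (\<lambda>y. 2 * y + 1) ` {1..l'}" unfolding CB_def \<sigma>_def by (auto simp: image_iff)
  have disj: "CA \<inter> CB = {}" unfolding CA_def CBo by (auto; presburger)
  have E1: "CE - CB = (\<lambda>x. 2 * x) ` {1..l}" using disj unfolding CE_def CA_def by blast
  have E2: "CE - CA = \<sigma> ` {1..l'}" using disj unfolding CE_def CB_def by blast
  have finE: "finite CE" unfolding CE_def CA_def CB_def by simp
  have injd: "inj (\<lambda>x::nat. 2 * x)" by (simp add: inj_on_def)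
  have injs: "inj \<sigma>"
    unfolding inj_on_def \<sigma>_def by (auto split: if_splits) presburger+
  have aG1: "arr (l' + n) (l + n) ?G" using ax_osum[OF g ax_id] .
  have aG2: "arr (l' + m) (l + m) ?G" using ax_osum[OF g ax_id] .
  have aL: "arr (l + m) (l + n) (comp f ?G)" using ax_comp[OF A aG1] .
  have aR: "arr (l' + m) (l' + n) (comp ?G f)" using ax_comp[OF aG2 A] .
  have \<phi>e: "\<phi> (2 * x) = mapn \<sigma> (f x)" for x unfolding \<phi>_def by simp
  have \<phi>o: "\<phi> (2 * y + 1) = mapn (\<lambda>j. 2 * j) (?G y)" for y unfolding \<phi>_def by simp
  have fnd: "isnd (f x) \<Longrightarrow> nodeOf (f x) \<in> {1..l'+n}" if "x \<in> {1..l+m}" for x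
    using arr_inT[OF A that] by (simp add: in_T_iff)
  have notCA: "\<not> tcontS CA (mapn \<sigma> (f x))" if x: "x \<in> {1..l+m}" for x
  proof
    assume t: "tcontS CA (mapn \<sigma> (f x))"
    then have nd: "isnd (f x)" using tcontS_isnd by fastforce
    let ?y = "nodeOf (f x)"
    have "\<sigma> ?y \<in> CA" using t nd by (simp add: tcontS_iff mapn_node)
    moreover have "?y \<in> {1..l'+n}" using fnd[OF x nd] .
    ultimately show False unfolding CA_def \<sigma>_def by (auto split: if_splits) presburger+
  qed
  have evenCB: "\<not> tcontS CB (mapn (\<lambda>j. 2 * j) z)" for z
  proof
    assume t: "tcontS CB (mapn (\<lambda>j. 2 * j) z)"
    then have nz: "isnd z" using tcontS_isnd by fastforce
    then have "2 * nodeOf z \<in> CB" using t by (simp add: tcontS_iff mapn_node)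
    then show False unfolding CBo by (auto; presburger)
  qed
  have L1: "wres \<phi> CB (2 * x) = mapn (\<lambda>j. 2 * j) (comp f ?G x)" if x: "x \<in> {1..l+m}" for x
  proof (cases "isnd (f x)")
    case False
    then have "\<not> tcontS CB (\<phi> (2 * x))" using \<phi>e by (simp add: tcontS_iff)
    then show ?thesis using wres_stop[of CB \<phi> "2 * x"] \<phi>e False
      by (cases "f x") (auto simp: comp_post post_def)
  next
    case True
    let ?y = "nodeOf (f x)"
    have y: "?y \<in> {1..l'+n}" using fnd[OF x True] .
    show ?thesis
    proof (cases "?y \<le> l'")
      case yl: True
      have t: "tcontS CB (\<phi> (2 * x))" using \<phi>e True yl y unfolding CB_def
        by (simp add: tcontS_iff mapn_node)
      have n2: "nodeOf (\<phi> (2 * x)) = 2 * ?y + 1" using \<phi>e True yl by (simp add: mapn_node \<sigma>_def)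
      have "\<not> tcontS CB (\<phi> (2 * ?y + 1))"
        unfolding \<phi>o by (rule evenCB)
      then have w2: "wres \<phi> CB (2 * ?y + 1) = mapn (\<lambda>j. 2 * j) (g ?y)"
        using wres_stop[of CB \<phi> "2 * ?y + 1"] \<phi>o yl by (simp add: osum_eq)
      have "wres \<phi> CB (2 * x) = pre (f x) (mapn (\<lambda>j. 2 * j) (g ?y))"
        using wres_go[of CB \<phi> "2 * x", OF t] n2 w2 \<phi>e by (simp add: pre_mapn)
      then show ?thesis using True yl by (simp add: comp_post post_isnd2 mapn_pre2 osum_eq)
    next
      case yl: False
      have "\<not> tcontS CB (\<phi> (2 * x))" using \<phi>e True yl unfolding CBo
        by (auto simp: tcontS_iff mapn_node \<sigma>_def) presburger
      then have "wres \<phi> CB (2 * x) = mapn \<sigma> (f x)" using wres_stop[of CB \<phi> "2 * x"] \<phi>e by simp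
      moreover have "?G ?y = Nd (l + (?y - l'))" using yl by (simp add: osum_eq idA_def)
      ultimately show ?thesis using True yl
        by (cases "f x") (auto simp: comp_post post_isnd2 \<sigma>_def)
    qed
  qed
  have L2: "wres \<phi> CA (\<sigma> y) = mapn \<sigma> (comp ?G f y)" if y: "y \<in> {1..l'}" for y
  proof -
    have sy: "\<sigma> y = 2 * y + 1" using y by (simp add: \<sigma>_def)
    have Gy: "?G y = g y" using y by (simp add: osum_eq)
    show ?thesis
    proof (cases "isnd (g y)")
      case False
      then have "\<not> tcontS CA (\<phi> (\<sigma> y))" using \<phi>o sy Gy by (simp add: tcontS_iff)
      then show ?thesis using wres_stop[of CA \<phi> "\<sigma> y"] \<phi>o sy Gy False
        by (cases "g y") (auto simp: comp_post post_def)
    next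
      case True
      let ?z = "nodeOf (g y)"
      have z: "?z \<in> {1..l}" using arr_inT[OF g y] True by (simp add: in_T_iff)
      have t: "tcontS CA (\<phi> (\<sigma> y))" using \<phi>o sy Gy True z unfolding CA_def
        by (simp add: tcontS_iff mapn_node)
      have n2: "nodeOf (\<phi> (\<sigma> y)) = 2 * ?z" using \<phi>o sy Gy True by (simp add: mapn_node)
      have zx: "?z \<in> {1..l+m}" using z by simp
      have w2: "wres \<phi> CA (2 * ?z) = mapn \<sigma> (f ?z)"
        using wres_stop[of CA \<phi> "2 * ?z"] notCA[OF zx] \<phi>e by simp
      have "wres \<phi> CA (\<sigma> y) = pre (g y) (mapn \<sigma> (f ?z))"
        using wres_go[of CA \<phi> "\<sigma> y", OF t] n2 w2 \<phi>o sy Gy by (simp add: pre_mapn)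
      then show ?thesis using True Gy by (simp add: comp_post post_isnd2 mapn_pre2)
    qed
  qed
  have li: "l + i \<in> {1..l+m}" using i by simp
  have L3: "wres \<phi> CA (2 * (l + i)) = mapn \<sigma> (comp ?G f (l' + i))"
  proof -
    have e: "\<phi> (2 * (l + i)) = mapn \<sigma> (f (l + i))" by (rule \<phi>e)
    have "\<not> tcontS CA (\<phi> (2 * (l + i)))" unfolding e by (rule notCA[OF li])
    then have "wres \<phi> CA (2 * (l + i)) = \<phi> (2 * (l + i))" by (rule wres_stop)
    then have "wres \<phi> CA (2 * (l + i)) = mapn \<sigma> (f (l + i))" using e by simp
    moreover have "?G (l' + i) = Nd (l + i)" using i by (simp add: osum_eq idA_def)
    ultimately show ?thesis by (simp add: comp_post post_def)
  qed
  have SL: "wres (wres \<phi> CB) ((\<lambda>x. 2 * x) ` {1..l}) (2 * (l + i)) = pre (Nd 0) (mapn (\<lambda>x. 2 * x) (wres (comp f ?G) {1..l} (l + i)))"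
  proof -
    have h: "\<forall>x\<in>{1..l}. wres \<phi> CB (2 * x) = mapn (\<lambda>x. 2 * x) (comp f ?G x)" using L1 by auto
    have st: "wres \<phi> CB (2 * (l + i)) = pre (Nd 0) (mapn (\<lambda>x. 2 * x) (comp f ?G (l + i)))"
      using L1[OF li] by (simp only: pre_Nd0)
    show ?thesis by (rule sim_wres[OF injd h _ st]) simp_all
  qed
  have SR: "wres (wres \<phi> CA) (\<sigma> ` {1..l'}) (2 * (l + i)) = pre (Nd 0) (mapn \<sigma> (wres (comp ?G f) {1..l'} (l' + i)))"
  proof -
    have h: "\<forall>y\<in>{1..l'}. wres \<phi> CA (\<sigma> y) = mapn \<sigma> (comp ?G f y)" using L2 by auto
    have st: "wres \<phi> CA (2 * (l + i)) = pre (Nd 0) (mapn \<sigma> (comp ?G f (l' + i)))"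
      using L3 by (simp only: pre_Nd0)
    show ?thesis by (rule sim_wres[OF injs h _ st]) simp_all
  qed
  have c1: "wres (wres \<phi> CB) (CE - CB) (2 * (l + i)) = wres \<phi> CE (2 * (l + i))"
    using compression[OF finE, of CB] unfolding CE_def by blast
  have c2: "wres (wres \<phi> CA) (CE - CA) (2 * (l + i)) = wres \<phi> CE (2 * (l + i))"
    using compression[OF finE, of CA] unfolding CE_def by blast
  let ?X = "wres (comp f ?G) {1..l} (l + i)" and ?Y = "wres (comp ?G f) {1..l'} (l' + i)"
  have XY: "mapn (\<lambda>x. 2 * x) ?X = mapn \<sigma> ?Y" using SL SR c1 c2 E1 E2 by simp
  have TX: "trace l n (comp f ?G) i = shift_out l ?X" using trace_wres'[OF aL i] .
  have TY: "trace l' n (comp ?G f) i = shift_out l' ?Y" using trace_wres'[OF aR i] .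
  have nY: "isnd ?Y \<Longrightarrow> nodeOf ?Y \<in> {l'+1..l'+n}" using tr_facts(2)[OF aR i] by simp
  show "trace l n (comp f ?G) i = trace l' n (comp ?G f) i"
    using XY nY unfolding TX TY by (cases ?X; cases ?Y) (auto simp: \<sigma>_def split: if_splits)
qed


theorem proposition4p3:
  shows "traced_smc"
proof -
  have c1: "\<forall>m. arr m m idA" using ax_id by blast
  have c2: "\<forall>m l n f g. arr m l f \<longrightarrow> arr l n g \<longrightarrow> arr m n (comp f g)"
    using ax_comp by blast
  have c3: "\<forall>m n f. arr m n f \<longrightarrow> arr_eq m (comp idA f) f \<and> arr_eq m (comp f idA) f"
    using ax_unit by blast
  have c4: "\<forall>m l k n f g h. arr m l f \<longrightarrow> arr l k g \<longrightarrow> arr k n h \<longrightarrow>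
        arr_eq m (comp (comp f g) h) (comp f (comp g h))"
    using ax_assoc by blast
  have c5: "\<forall>m n k l f g. arr m n f \<longrightarrow> arr k l g \<longrightarrow> arr (m + k) (n + l) (osum m n f g)"
    using ax_osum by blast
  have c6: "\<forall>m n. arr_eq (m + n) (osum m m idA idA) idA"
    using ax_osum_id by blast
  have c7: "\<forall>m1 m2 m3 k1 k2 k3 f g f' g'. arr m1 m2 f \<longrightarrow> arr m2 m3 g \<longrightarrow> arr k1 k2 f' \<longrightarrow> arr k2 k3 g' \<longrightarrow>
        arr_eq (m1 + k1) (osum m1 m3 (comp f g) (comp f' g')) (comp (osum m1 m2 f f') (osum m2 m3 g g'))"
    using ax_interchange by blast
  have c8: "\<forall>m n k l p q f g h. arr m n f \<longrightarrow> arr k l g \<longrightarrow> arr p q h \<longrightarrow>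
        arr_eq (m + k + p) (osum (m + k) (n + l) (osum m n f g) h) (osum m n f (osum k l g h))"
    using ax_osum_assoc by blast
  have c9: "\<forall>m n f. arr m n f \<longrightarrow> arr_eq m (osum m n f idA) f \<and> arr_eq m (osum 0 0 idA f) f"
    using ax_osum_unit by blast
  have c10: "\<forall>m n. arr (m + n) (n + m) (sym m n)" using ax_sym by blast
  have c11: "\<forall>m n k l f g. arr m n f \<longrightarrow> arr k l g \<longrightarrow>
        arr_eq (m + k) (comp (osum m n f g) (sym n l)) (comp (sym m k) (osum k l g f))"
    using ax_sym_nat by blast
  have c12: "\<forall>m n. arr_eq (m + n) (comp (sym m n) (sym n m)) idA" using ax_sym_inv by blast
  have c13: "\<forall>m n k. arr_eq (m + n + k) (sym m (n + k)) (comp (osum (m + n) (n + m) (sym m n) idA) (osum n n idA (sym m k)))"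
    using ax_hex by blast
  have c14: "\<forall>l m n f. arr (l + m) (l + n) f \<longrightarrow> arr m n (trace l n f)" using ax_trace_arr by blast
  have c15: "\<forall>l m m' n' n f g h. arr m m' g \<longrightarrow> arr (l + m') (l + n') f \<longrightarrow> arr n' n h \<longrightarrow>
        arr_eq m (trace l n (comp (comp (osum l l idA g) f) (osum l l idA h)))
                 (comp (comp g (trace l n' f)) h)"
    using ax_tight by blast
  have c16: "\<forall>l l' m n f g. arr (l + m) (l' + n) f \<longrightarrow> arr l' l g \<longrightarrow>
        arr_eq m (trace l n (comp f (osum l' l g idA))) (trace l' n (comp (osum l' l g idA) f))"
    using ax_slide by blast
  have c17: "\<forall>m n f. arr m n f \<longrightarrow> arr_eq m (trace 0 n f) f" using ax_van1 by blast
  have c18: "\<forall>l l' m n f. arr (l + l' + m) (l + l' + n) f \<longrightarrow>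
        arr_eq m (trace (l + l') n f) (trace l' n (trace l (l' + n) f))"
    using ax_van2 by blast
  have c19: "\<forall>l m n k p f g. arr (l + m) (l + n) f \<longrightarrow> arr k p g \<longrightarrow>
        arr_eq (m + k) (trace l (n + p) (osum (l + m) (l + n) f g)) (osum m n (trace l n f) g)"
    using ax_super by blast
  have c20: "\<forall>l. arr_eq l (trace l l (sym l l)) idA" using ax_yank by blast
  show ?thesis unfolding traced_smc_def
    by (intro conjI c1 c2 c3 c4 c5 c6 c7 c8 c9 c10 c11 c12 c13 c14 c15 c16 c17 c18 c19 c20)
qed

end
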